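(* Let $\tau>0$, $M\in\mathbb{Z}^+$, and let $a_i,w_i:[0,\tau]\to\mathbb{R}^N$, $b_i:[0,\tau]\to\mathbb{R}$ ($i=1,\dots,M$) be piecewise constant functions. Let $\phi^\tau:\mathbb{R}^N\to\mathbb{R}^N$ be the flow map $\phi^\tau(x_0)=x(\tau)$ of the ODE $\dot x(t)=\sum_{i=1}^M a_i(t)\tanh(w_i(t)\cdot x(t)+b_i(t))$, $t\in[0,\tau]$, $x(0)=x_0$. Let $\Omega\subset\mathbb{R}^N$ be compact and $\varepsilon>0$. Then there exist $L$ and a leaky-ReLU network $\psi\in\mathcal{N}_{N,L}(\sigma_\alpha)$ from $\mathbb{R}^N$ to $\mathbb{R}^N$ of width $N$ and depth $L$ such that $\|\phi^\tau(x_0)-\psi(x_0)\|<\varepsilon$ for all $x_0\in\Omega$.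
   Context: Fix $\alpha\in\mathbb{R}^+\setminus\{1\}$ and let $\sigma_\alpha(x)=x$ for $x>0$ and $\sigma_\alpha(x)=\alpha x$ for $x\le 0$, applied coordinatewise (leaky-ReLU). A leaky-ReLU network of width $N$ and depth $L$ from $\mathbb{R}^{d_x}$ to $\mathbb{R}^{d_y}$ is a map $x\mapsto W_{L+1}\sigma_\alpha(W_L(\cdots\sigma_\alpha(W_1x+b_1)\cdots)+b_L)+b_{L+1}$ with $W_1\in\mathbb{R}^{N\times d_x}$, $W_i\in\mathbb{R}^{N\times N}$ for $2\le i\le L$, $b_i\in\mathbb{R}^N$ for $1\le i\le L$, $W_{L+1}\in\mathbb{R}^{d_y\times N}$, $b_{L+1}\in\mathbb{R}^{d_y}$; $\mathcal{N}_{N,L}(\sigma_\alpha)$ is the set of such networks. Here $d_x=d_y=N$. $\|\cdot\|$ is the Euclidean norm. *)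

theory Defs
  imports "HOL-Analysis.Analysis"
begin

definition leaky_relu :: "real \<Rightarrow> real \<Rightarrow> real" where
  "leaky_relu \<alpha> x = (if x > 0 then x else \<alpha> * x)"

definition leaky_relu_vec :: "real \<Rightarrow> real ^ 'n \<Rightarrow> real ^ 'n" where
  "leaky_relu_vec \<alpha> v = (\<chi> i. leaky_relu \<alpha> (v $ i))"

fun net_eval :: "real \<Rightarrow> ((real ^ 'n ^ 'n) \<times> (real ^ 'n)) list \<Rightarrow> real ^ 'n \<Rightarrow> real ^ 'n" where
  "net_eval \<alpha> [] x = x"
| "net_eval \<alpha> [(W, b)] x = W *v x + b"
| "net_eval \<alpha> ((W, b) # rest) x = net_eval \<alpha> rest (leaky_relu_vec \<alpha> (W *v x + b))"

definition leaky_nets :: "real \<Rightarrow> nat \<Rightarrow> (real ^ 'n \<Rightarrow> real ^ 'n) set" where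
  "leaky_nets \<alpha> L = {\<psi>. \<exists>layers. length layers = L + 1 \<and> \<psi> = net_eval \<alpha> layers}"

definition piecewise_constant_on :: "real \<Rightarrow> (real \<Rightarrow> 'a) \<Rightarrow> bool" where
  "piecewise_constant_on \<tau> f \<longleftrightarrow>
     (\<exists>ts :: real list. length ts \<ge> 2 \<and> sorted_wrt (<) ts \<and> hd ts = 0 \<and> last ts = \<tau> \<and>
        (\<forall>j < length ts - 1. \<exists>c. \<forall>t \<in> {ts ! j <..< ts ! (j + 1)}. f t = c))"

definition tanh_field ::
  "nat \<Rightarrow> (nat \<Rightarrow> real \<Rightarrow> real ^ 'n) \<Rightarrow> (nat \<Rightarrow> real \<Rightarrow> real ^ 'n) \<Rightarrow> (nat \<Rightarrow> real \<Rightarrow> real)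
     \<Rightarrow> real \<Rightarrow> real ^ 'n \<Rightarrow> real ^ 'n" where
  "tanh_field M a w b t x = (\<Sum>i = 1..M. tanh (w i t \<bullet> x + b i t) *\<^sub>R a i t)"

text \<open>x is a (Caratheodory) solution on [0,tau] of x' = F(t,x), x(0) = x0.\<close>
definition is_solution :: "real \<Rightarrow> (real \<Rightarrow> real ^ 'n \<Rightarrow> real ^ 'n) \<Rightarrow> real ^ 'n \<Rightarrow> (real \<Rightarrow> real ^ 'n) \<Rightarrow> bool" where
  "is_solution \<tau> F x0 x \<longleftrightarrow> continuous_on {0..\<tau>} x \<and> x 0 = x0 \<and>
     (\<forall>t \<in> {0..\<tau>}. (\<lambda>s. F s (x s)) integrable_on {0..t} \<and> x t = x0 + integral {0..t} (\<lambda>s. F s (x s)))"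

definition is_flow_map :: "real \<Rightarrow> (real \<Rightarrow> real ^ 'n \<Rightarrow> real ^ 'n) \<Rightarrow> (real ^ 'n \<Rightarrow> real ^ 'n) \<Rightarrow> bool" where
  "is_flow_map \<tau> F \<phi> \<longleftrightarrow> (\<forall>x0. \<exists>x. is_solution \<tau> F x0 x \<and> \<phi> x0 = x \<tau>)"

end

theory Submission
  imports Defs
begin

fun pre :: "real \<Rightarrow> ((real ^ 'n ^ 'n) \<times> (real ^ 'n)) list \<Rightarrow> real ^ 'n \<Rightarrow> real ^ 'n" where
  "pre \<alpha> [] x = x"
| "pre \<alpha> ((W, b) # rest) x = pre \<alpha> rest (leaky_relu_vec \<alpha> (W *v x + b))"

lemma net_eval_snoc: "net_eval \<alpha> (xs @ [(W,b)]) x = W *v pre \<alpha> xs x + b"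
proof (induction xs arbitrary: x)
  case Nil then show ?case by simp
next
  case (Cons l xs)
  obtain V c where l: "l = (V,c)" by force
  obtain y ys where "xs @ [(W,b)] = y # ys" by (cases "xs @ [(W,b)]") auto
  then have "net_eval \<alpha> ((V,c) # xs @ [(W,b)]) x = net_eval \<alpha> (xs @ [(W,b)]) (leaky_relu_vec \<alpha> (V *v x + c))"
    by (metis net_eval.simps(3))
  then show ?case using Cons l by simp
qed

lemma pre_append: "pre \<alpha> (xs @ ys) x = pre \<alpha> ys (pre \<alpha> xs x)"
  by (induction \<alpha> xs x rule: pre.induct) auto

lemma pre_cons_affine:
  "pre \<alpha> ((V,c) # ys) (W *v v + b) = pre \<alpha> ((V ** W, V *v b + c) # ys) v"
  by (simp add: matrix_vector_mul_assoc matrix_vector_right_distrib add.assoc)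

lemma leaky_relu_alt: "leaky_relu \<alpha> x = x + (\<alpha> - 1) * min x 0"
  by (simp add: leaky_relu_def min_def algebra_simps)

lemma continuous_leaky_relu_vec: "continuous_on UNIV (leaky_relu_vec \<alpha>)"
  unfolding leaky_relu_vec_def leaky_relu_alt
  by (intro continuous_intros)

definition Rcl :: "real \<Rightarrow> (real ^ 'n \<Rightarrow> real ^ 'n) set" where
  "Rcl \<alpha> = {G. continuous_on UNIV G \<and> (\<forall>K. compact K \<longrightarrow>
      (\<exists>xs W b. xs \<noteq> [] \<and> (\<forall>x\<in>K. W *v pre \<alpha> xs x + b = G x)))}"

lemma Rcl_comp:
  fixes F G :: "real^'n \<Rightarrow> real^'n"
  assumes F: "F \<in> Rcl \<alpha>" and G: "G \<in> Rcl \<alpha>"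
  shows "(G \<circ> F) \<in> Rcl \<alpha>"
  unfolding Rcl_def
proof (intro CollectI conjI allI impI)
  have cF: "continuous_on UNIV F" and cG: "continuous_on UNIV G" using F G by (auto simp: Rcl_def)
  then show "continuous_on UNIV (G \<circ> F)" by (metis continuous_on_compose continuous_on_subset subset_UNIV)
  fix K :: "(real^'n) set" assume K: "compact K"
  obtain xs1 W1 b1 where n1: "xs1 \<noteq> []" "\<forall>x\<in>K. W1 *v pre \<alpha> xs1 x + b1 = F x"
    using F K unfolding Rcl_def by blast
  have "compact (F ` K)" using cF K by (metis compact_continuous_image continuous_on_subset subset_UNIV)
  then obtain xs2 W2 b2 where n2: "xs2 \<noteq> []" "\<forall>x\<in>F ` K. W2 *v pre \<alpha> xs2 x + b2 = G x"
    using G unfolding Rcl_def by blast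
  obtain V c ys where xs2: "xs2 = (V,c) # ys" using n2(1) by (metis list.exhaust prod.exhaust)
  show "\<exists>xs W b. xs \<noteq> [] \<and> (\<forall>x\<in>K. W *v pre \<alpha> xs x + b = (G \<circ> F) x)"
  proof (intro exI conjI ballI)
    show "xs1 @ ((V ** W1, V *v b1 + c) # ys) \<noteq> []" by simp
    fix x assume x: "x \<in> K"
    have "W2 *v pre \<alpha> (xs1 @ ((V ** W1, V *v b1 + c) # ys)) x + b2
        = W2 *v pre \<alpha> xs2 (W1 *v pre \<alpha> xs1 x + b1) + b2"
      by (simp add: pre_append xs2 pre_cons_affine del: pre.simps)
    also have "\<dots> = G (F x)" using n1 n2 x by auto
    finally show "W2 *v pre \<alpha> (xs1 @ ((V ** W1, V *v b1 + c) # ys)) x + b2 = (G \<circ> F) x" by simp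
  qed
qed

lemma leaky_relu_vec_pos: "(\<forall>i. v $ i > 0) \<Longrightarrow> leaky_relu_vec \<alpha> v = v"
  by (simp add: leaky_relu_vec_def leaky_relu_def vec_eq_iff)

lemma Rcl_affine:
  fixes f :: "real^'n \<Rightarrow> real^'n"
  assumes lin: "linear f"
  shows "(\<lambda>x. f x + c) \<in> Rcl \<alpha>"
  unfolding Rcl_def
proof (intro CollectI conjI allI impI)
  show "continuous_on UNIV (\<lambda>x. f x + c)"
    using lin by (intro continuous_intros linear_continuous_on linear_conv_bounded_linear[THEN iffD1])
  fix K :: "(real^'n) set" assume K: "compact K"
  have "compact ((\<lambda>x. f x + c) ` K)"
    using K lin by (intro compact_continuous_image continuous_intros linear_continuous_on linear_conv_bounded_linear[THEN iffD1])
  then obtain B where B: "\<forall>y\<in>(\<lambda>x. f x + c) ` K. norm y \<le> B"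
    using compact_imp_bounded bounded_iff by metis
  define d :: "real^'n" where "d = (\<chi> i. B + 1)"
  show "\<exists>xs W b. xs \<noteq> [] \<and> (\<forall>x\<in>K. W *v pre \<alpha> xs x + b = f x + c)"
  proof (intro exI conjI ballI)
    show "[(matrix f, c + d)] \<noteq> []" by simp
    fix x assume x: "x \<in> K"
    have nb: "norm (f x + c) \<le> B" using B x by auto
    have pos: "\<forall>i. (matrix f *v x + (c + d)) $ i > 0"
    proof
      fix i
      have "\<bar>(f x + c) $ i\<bar> \<le> B" using nb component_le_norm_cart order_trans by blast
      then show "(matrix f *v x + (c + d)) $ i > 0"
        using matrix_works[OF lin[folded linear_matrix_vector_mul_eq]] by (simp add: d_def)
    qed
    show "mat 1 *v pre \<alpha> [(matrix f, c + d)] x + (- d) = f x + c"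
      using leaky_relu_vec_pos[OF pos] matrix_works[OF lin[folded linear_matrix_vector_mul_eq]] by simp
  qed
qed

lemma Rcl_sigma: "leaky_relu_vec \<alpha> \<in> Rcl \<alpha>"
  unfolding Rcl_def
proof (intro CollectI conjI allI impI)
  show "continuous_on UNIV (leaky_relu_vec \<alpha>)" by (rule continuous_leaky_relu_vec)
  fix K :: "(real^'n) set"
  show "\<exists>xs W b. xs \<noteq> [] \<and> (\<forall>x\<in>K. W *v pre \<alpha> xs x + b = leaky_relu_vec \<alpha> x)"
    by (intro exI[of _ "[(mat 1, 0)]"] exI[of _ "mat 1"] exI[of _ 0]) simp
qed

lemma Rcl_net:
  assumes "G \<in> Rcl \<alpha>" "compact K"
  shows "\<exists>L\<ge>1. \<exists>\<psi> \<in> leaky_nets \<alpha> L. \<forall>x\<in>K. \<psi> x = G x"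
proof -
  obtain xs W b where n: "xs \<noteq> []" "\<forall>x\<in>K. W *v pre \<alpha> xs x + b = G x"
    using assms unfolding Rcl_def by blast
  show ?thesis
  proof (intro exI conjI bexI ballI)
    show "1 \<le> length xs" using n by (cases xs) auto
    show "net_eval \<alpha> (xs @ [(W,b)]) \<in> leaky_nets \<alpha> (length xs)"
      unfolding leaky_nets_def by (intro CollectI exI[of _ "xs @ [(W,b)]"]) simp
    fix x assume "x \<in> K" then show "net_eval \<alpha> (xs @ [(W,b)]) x = G x"
      using n net_eval_snoc by metis
  qed
qed



lemma Rcl_local:
  fixes f :: "real^'n \<Rightarrow> real^'n"
  assumes "continuous_on UNIV f" "\<And>K. compact K \<Longrightarrow> \<exists>G\<in>Rcl \<alpha>. \<forall>x\<in>K. G x = f x"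
  shows "f \<in> Rcl \<alpha>"
  unfolding Rcl_def
proof (intro CollectI conjI allI impI)
  show "continuous_on UNIV f" by fact
  fix K :: "(real^'n) set" assume K: "compact K"
  obtain G where G: "G \<in> Rcl \<alpha>" "\<forall>x\<in>K. G x = f x" using assms(2)[OF K] by blast
  then obtain xs W b where "xs \<noteq> []" "\<forall>x\<in>K. W *v pre \<alpha> xs x + b = G x"
    using K unfolding Rcl_def by blast
  then show "\<exists>xs W b. xs \<noteq> [] \<and> (\<forall>x\<in>K. W *v pre \<alpha> xs x + b = f x)" using G by auto
qed

lemma Rcl_linear:
  fixes f :: "real^'n \<Rightarrow> real^'n"
  assumes "linear f" shows "f \<in> Rcl \<alpha>"
  using Rcl_affine[OF assms, of 0] by simp

lemma Rcl_comp':
  fixes F G :: "real^'n \<Rightarrow> real^'n"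
  shows "F \<in> Rcl \<alpha> \<Longrightarrow> G \<in> Rcl \<alpha> \<Longrightarrow> (\<lambda>x. G (F x)) \<in> Rcl \<alpha>"
  using Rcl_comp[of F \<alpha> G] by (simp add: o_def)

definition coordmin :: "real^'n \<Rightarrow> real^'n" where
  "coordmin z = (\<chi> j. min (z $ j) 0)"

lemma Rcl_tau:
  fixes \<alpha> \<kappa> :: real
  assumes "\<alpha> > 0" "\<kappa> = \<alpha> - 1 \<or> \<kappa> = 1/\<alpha> - 1"
  shows "(\<lambda>z::real^'n. z + \<kappa> *\<^sub>R coordmin z) \<in> Rcl \<alpha>"
  using assms(2)
proof
  assume k: "\<kappa> = \<alpha> - 1"
  have "(\<lambda>z::real^'n. z + \<kappa> *\<^sub>R coordmin z) = leaky_relu_vec \<alpha>"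
    by (auto simp: k leaky_relu_vec_def leaky_relu_alt coordmin_def vec_eq_iff)
  then show ?thesis using Rcl_sigma by metis
next
  assume k: "\<kappa> = 1/\<alpha> - 1"
  have "(\<lambda>z::real^'n. z + \<kappa> *\<^sub>R coordmin z) = (\<lambda>z. (- (1/\<alpha>)) *\<^sub>R leaky_relu_vec \<alpha> (- z))"
    using assms(1) by (auto simp: k leaky_relu_vec_def leaky_relu_def coordmin_def vec_eq_iff field_simps)
  moreover have "(\<lambda>z::real^'n. (- (1/\<alpha>)) *\<^sub>R leaky_relu_vec \<alpha> (- z)) \<in> Rcl \<alpha>"
    by (intro Rcl_comp'[OF Rcl_comp'[OF Rcl_linear Rcl_sigma] Rcl_linear])
       (auto intro: linear_compose_neg linear_id linear_scaleR simp: linear_uminus)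
  ultimately show ?thesis by metis
qed



definition dirmap :: "real^'n \<Rightarrow> real^'n \<Rightarrow> (real \<Rightarrow> real) \<Rightarrow> real^'n \<Rightarrow> real^'n" where
  "dirmap l p q y = y + (q (l \<bullet> y) - l \<bullet> y) *\<^sub>R p"

definition kink :: "real \<Rightarrow> real \<Rightarrow> real \<Rightarrow> real" where
  "kink t \<kappa> u = u + \<kappa> * min (u - t) 0"

lemma dirmap_inner: "l \<bullet> p = 1 \<Longrightarrow> l \<bullet> dirmap l p q y = q (l \<bullet> y)"
  by (simp add: dirmap_def inner_add_right)

lemma dirmap_comp: "l \<bullet> p = 1 \<Longrightarrow> dirmap l p q2 (dirmap l p q1 y) = dirmap l p (\<lambda>u. q2 (q1 u)) y"
  using dirmap_inner[of l p q1 y] by (simp add: dirmap_def algebra_simps)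

lemma Rcl_prim:
  fixes l p :: "real^'n"
  assumes lp: "l \<bullet> p = 1" and a: "\<alpha> > 0" and k: "\<kappa> = \<alpha> - 1 \<or> \<kappa> = 1/\<alpha> - 1"
  shows "dirmap l p (kink t \<kappa>) \<in> Rcl \<alpha>"
proof (rule Rcl_local)
  show "continuous_on UNIV (dirmap l p (kink t \<kappa>))"
    unfolding dirmap_def kink_def by (intro continuous_intros)
  have "l \<noteq> 0" using lp by auto
  then obtain i where li: "l $ i \<noteq> 0" by (auto simp: vec_eq_iff)
  define Q :: "real^'n \<Rightarrow> real^'n" where "Q y = (\<chi> j. if j = i then l \<bullet> y else y $ j - p $ j * (l \<bullet> y))" for y
  have linQ: "linear Q"
    by (rule linearI) (auto simp: Q_def vec_eq_iff inner_add_right algebra_simps)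
  have "inj Q"
    unfolding linear_injective_0[OF linQ]
  proof (intro allI impI)
    fix y assume "Q y = 0"
    then have ly: "l \<bullet> y = 0" by (auto simp: Q_def vec_eq_iff dest: spec[of _ i])
    from \<open>Q y = 0\<close> have yj: "\<And>j. j \<noteq> i \<Longrightarrow> y $ j = 0"
    proof -
      fix j assume "j \<noteq> i"
      with \<open>Q y = 0\<close> have "y $ j - p $ j * (l \<bullet> y) = 0"
        by (auto simp: Q_def vec_eq_iff dest: spec[of _ j])
      then show "y $ j = 0" using ly by simp
    qed
    have "l \<bullet> y = (\<Sum>j\<in>UNIV. if j = i then l $ i * y $ i else 0)"
      unfolding inner_vec_def by (intro sum.cong) (auto simp: yj)
    then have "l $ i * y $ i = 0" using ly by simp
    then have "y $ i = 0" using li by simp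
    then show "y = 0" using yj by (metis vec_eq_iff zero_index)
  qed
  then obtain Qi where linQi: "linear Qi" and QiQ: "Qi \<circ> Q = id"
    using linear_injective_left_inverse[OF linQ] by blast
  have QiQ': "Qi (Q y) = y" for y using QiQ by (metis comp_apply id_apply)
  have Qp: "Q p = axis i 1" using lp by (auto simp: Q_def vec_eq_iff axis_def)
  fix K :: "(real^'n) set" assume K: "compact K"
  have "compact (Q ` K)" using K linQ
    by (intro compact_continuous_image linear_continuous_on linear_conv_bounded_linear[THEN iffD1])
  then obtain Bd where Bd: "\<forall>z\<in>Q ` K. norm z \<le> Bd" using compact_imp_bounded bounded_iff by metis
  define d :: "real^'n" where "d = (\<chi> j. if j = i then - t else Bd + 1)"
  define G where "G = (\<lambda>y. (\<lambda>v. Qi v + (- Qi d)) ((\<lambda>z. z + \<kappa> *\<^sub>R coordmin z) (Q y + d)))"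
  show "\<exists>G\<in>Rcl \<alpha>. \<forall>x\<in>K. G x = dirmap l p (kink t \<kappa>) x"
  proof (intro bexI ballI)
    show "G \<in> Rcl \<alpha>" unfolding G_def
      by (intro Rcl_comp'[OF Rcl_comp'[OF Rcl_affine Rcl_tau] Rcl_affine] linQ linQi a k)
    fix y assume y: "y \<in> K"
    have cm: "coordmin (Q y + d) = min (l \<bullet> y - t) 0 *\<^sub>R axis i 1"
    proof -
      have "\<bar>(if j = i then l \<bullet> y else y $ j - p $ j * (l \<bullet> y))\<bar> \<le> Bd" for j
        unfolding Q_def[symmetric, of y, THEN arg_cong[where f="\<lambda>v. v $ j"], simplified] using Bd y component_le_norm_cart order_trans by blast
      then have "j \<noteq> i \<Longrightarrow> \<bar>y $ j - p $ j * (l \<bullet> y)\<bar> \<le> Bd" for j by (metis (full_types))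
      then show ?thesis by (fastforce simp: coordmin_def vec_eq_iff d_def Q_def axis_def)
    qed
    have "G y = Qi (Q y + \<kappa> *\<^sub>R (min (l \<bullet> y - t) 0 *\<^sub>R Q p))"
      unfolding G_def cm Qp
      using linear_add[OF linQi] linear_diff[OF linQi]
      by (simp add: algebra_simps linear_diff[OF linQi, symmetric] linear_add[OF linQi, symmetric])
    also have "\<dots> = y + (\<kappa> * min (l \<bullet> y - t) 0) *\<^sub>R p"
      by (simp add: linear_add[OF linQi] linear_scale[OF linQi] QiQ')
    also have "\<dots> = dirmap l p (kink t \<kappa>) y" by (simp add: dirmap_def kink_def)
    finally show "G y = dirmap l p (kink t \<kappa>) y" .
  qed
qed



definition bmp :: "real \<Rightarrow> real \<Rightarrow> real \<Rightarrow> real \<Rightarrow> real" where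
  "bmp \<rho> u0 v0 u = u + (\<rho> - 1) * (min (max u u0) v0 - v0)"

lemma bmp_kinks:
  assumes rp: "\<rho> > 0" and uv: "u0 \<le> v0"
  shows "bmp \<rho> u0 v0 u = kink (v0 + \<rho> * (u0 - v0)) (1/\<rho> - 1) (kink v0 (\<rho> - 1) u)"
proof -
  define t where "t = v0 + \<rho> * (u0 - v0)"
  define k where "k = u + (\<rho> - 1) * (u - v0)"
  have kt: "k - t = \<rho> * (u - u0)" by (simp add: k_def t_def algebra_simps)
  consider "u \<ge> v0" | "u0 \<le> u \<and> u \<le> v0" | "u \<le> u0" by linarith
  then show ?thesis
  proof cases
    case 1
    have "\<rho> * (u0 - v0) \<le> 0" using rp uv by (simp add: mult_nonneg_nonpos)
    then have "t \<le> u" using 1 by (simp add: t_def)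
    then have "kink t (1/\<rho> - 1) u = u" by (simp add: kink_def min_absorb2)
    moreover have "kink v0 (\<rho> - 1) u = u" using 1 by (simp add: kink_def min_absorb2)
    moreover have "bmp \<rho> u0 v0 u = u" using 1 uv by (simp add: bmp_def min_absorb2)
    ultimately show ?thesis by (simp add: t_def)
  next
    case 2
    have "kink v0 (\<rho> - 1) u = k" using 2 by (simp add: kink_def min_absorb1 k_def)
    moreover have "k - t \<ge> 0" unfolding kt using 2 rp by simp
    then have "kink t (1/\<rho> - 1) k = k" by (simp add: kink_def min_absorb2)
    moreover have "bmp \<rho> u0 v0 u = k" using 2 by (simp add: bmp_def k_def)
    ultimately show ?thesis by (simp add: t_def)
  next
    case 3
    have "kink v0 (\<rho> - 1) u = k" using 3 uv by (simp add: kink_def min_absorb1 k_def)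
    moreover have "k - t \<le> 0" unfolding kt using 3 rp by (simp add: mult_nonneg_nonpos)
    then have "kink t (1/\<rho> - 1) k = k + (1/\<rho> - 1) * (\<rho> * (u - u0))"
      by (simp add: kink_def min_absorb1 kt)
    moreover have "k + (1/\<rho> - 1) * (\<rho> * (u - u0)) = u + (\<rho> - 1) * (u0 - v0)"
      using rp by (simp add: k_def field_simps)
    moreover have "bmp \<rho> u0 v0 u = u + (\<rho> - 1) * (u0 - v0)" using 3 uv by (simp add: bmp_def)
    ultimately show ?thesis by (simp add: t_def)
  qed
qed

lemma Rcl_bmp:
  fixes l p :: "real^'n"
  assumes lp: "l \<bullet> p = 1" and a: "\<alpha> > 0" and r: "\<rho> = \<alpha> \<or> \<rho> = 1/\<alpha>" and uv: "u0 \<le> v0"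
  shows "dirmap l p (bmp \<rho> u0 v0) \<in> Rcl \<alpha>"
proof -
  have rp: "\<rho> > 0" using r a by auto
  have e: "bmp \<rho> u0 v0 = (\<lambda>u. kink (v0 + \<rho> * (u0 - v0)) (1/\<rho> - 1) (kink v0 (\<rho> - 1) u))"
    using bmp_kinks[OF rp uv] by (simp add: fun_eq_iff)
  have "dirmap l p (bmp \<rho> u0 v0) = (\<lambda>y. dirmap l p (kink (v0 + \<rho> * (u0 - v0)) (1/\<rho> - 1)) (dirmap l p (kink v0 (\<rho> - 1)) y))"
    unfolding e by (simp add: dirmap_comp[OF lp] fun_eq_iff)
  also have "\<dots> \<in> Rcl \<alpha>"
    by (rule Rcl_comp'; rule Rcl_prim[OF lp a]) (use r in auto)
  finally show ?thesis .
qed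

lemma bmp_mono:
  assumes "\<rho> > 0" "u0 \<le> v0" "u \<le> u'"
  shows "bmp \<rho> u0 v0 u \<le> bmp \<rho> u0 v0 u'"
proof -
  define c where "c x = min (max x u0) v0" for x
  have c: "0 \<le> c u' - c u" "c u' - c u \<le> u' - u" using assms by (auto simp: c_def min_def max_def)
  have "bmp \<rho> u0 v0 u' - bmp \<rho> u0 v0 u = (u' - u) + (\<rho> - 1) * (c u' - c u)"
    by (simp add: bmp_def c_def algebra_simps)
  also have "\<dots> \<ge> 0"
  proof (cases "\<rho> \<ge> 1")
    case True then show ?thesis using c assms by simp
  next
    case False
    then have "(\<rho> - 1) * (c u' - c u) \<ge> (\<rho> - 1) * (u' - u)"
      using c by (intro mult_left_mono_neg) auto
    moreover have "(u' - u) + (\<rho> - 1) * (u' - u) = \<rho> * (u' - u)" by (simp add: algebra_simps)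
    moreover have "\<rho> * (u' - u) \<ge> 0" using assms by simp
    ultimately show ?thesis by linarith
  qed
  finally show ?thesis by simp
qed

fun Xc :: "(nat \<Rightarrow> real) \<Rightarrow> (nat \<Rightarrow> real) \<Rightarrow> real \<Rightarrow> nat \<Rightarrow> real \<Rightarrow> real" where
  "Xc U V \<rho> 0 u = u"
| "Xc U V \<rho> (Suc n) u = bmp \<rho> (U n) (V n) (Xc U V \<rho> n u)"

lemma Rcl_Xc:
  fixes l p :: "real^'n"
  assumes lp: "l \<bullet> p = 1" and a: "\<alpha> > 0" and r: "\<rho> = \<alpha> \<or> \<rho> = 1/\<alpha>" and uv: "\<And>j. U j \<le> V j"
  shows "dirmap l p (Xc U V \<rho> n) \<in> Rcl \<alpha>"
proof (induction n)
  case 0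
  have e: "dirmap l p (Xc U V \<rho> 0) = (\<lambda>y. y)" by (simp add: dirmap_def fun_eq_iff)
  have "(\<lambda>y::real^'n. y) \<in> Rcl \<alpha>" using Rcl_linear[of "\<lambda>y. y"] linear_id[unfolded id_def] by blast
  then show ?case unfolding e .
next
  case (Suc n)
  have "dirmap l p (Xc U V \<rho> (Suc n)) = (\<lambda>y. dirmap l p (bmp \<rho> (U n) (V n)) (dirmap l p (Xc U V \<rho> n) y))"
    by (simp add: dirmap_comp[OF lp] Xc.simps(2)[abs_def])
  also have "\<dots> \<in> Rcl \<alpha>" by (rule Rcl_comp'[OF Suc Rcl_bmp[OF lp a r uv]])
  finally show ?case .
qed



lemma g_abs_bound:
  fixes g :: "real \<Rightarrow> real" and \<rho> u u' :: real
  assumes hg: "\<And>u u'. u \<le> u' \<Longrightarrow> 0 \<le> (g u' - g u) / (\<rho> - 1) \<and> (g u' - g u) / (\<rho> - 1) \<le> u' - u"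
    and r1: "\<rho> \<noteq> 1" and uu: "u \<le> u'"
  shows "\<bar>g u' - g u\<bar> \<le> \<bar>\<rho> - 1\<bar> * (u' - u)"
proof -
  define q where "q = (g u' - g u) / (\<rho> - 1)"
  have "\<rho> - 1 \<noteq> 0" using r1 by simp
  then have "g u' - g u = (\<rho> - 1) * q" by (simp add: q_def)
  moreover have "q \<ge> 0" using hg[OF uu] by (simp add: q_def)
  ultimately have "\<bar>g u' - g u\<bar> = \<bar>\<rho> - 1\<bar> * q" by (simp add: abs_mult)
  also have "\<dots> \<le> \<bar>\<rho> - 1\<bar> * (u' - u)" using hg[OF uu] by (intro mult_left_mono) (auto simp: q_def)
  finally show ?thesis .
qed

lemma Xc_interp:
  fixes g :: "real \<Rightarrow> real"
  assumes rp: "\<rho> > 0" and r1: "\<rho> \<noteq> 1" and dp: "\<Delta> > 0"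
    and hg: "\<And>u u'. u \<le> u' \<Longrightarrow> 0 \<le> (g u' - g u) / (\<rho> - 1) \<and> (g u' - g u) / (\<rho> - 1) \<le> u' - u"
    and U: "U = (\<lambda>j. a + real j * \<Delta>)"
    and V: "V = (\<lambda>j. U j + (g (U (Suc j)) - g (U j)) / (\<rho> - 1))"
  shows "(\<forall>u. a \<le> u \<longrightarrow> u \<le> U n \<longrightarrow> \<bar>Xc U V \<rho> n u - (u + g u - g (U n))\<bar> \<le> 2 * \<bar>\<rho> - 1\<bar> * \<Delta>)
       \<and> (\<forall>u. U n \<le> u \<longrightarrow> Xc U V \<rho> n u = u)
       \<and> (\<forall>u u'. u \<le> u' \<longrightarrow> Xc U V \<rho> n u \<le> Xc U V \<rho> n u')"
proof (induction n)
  case 0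
  show ?case using dp by (auto simp: U)
next
  case (Suc n)
  note IH1 = Suc[THEN conjunct1, rule_format]
  note IH2 = Suc[THEN conjunct2, THEN conjunct1, rule_format]
  note IH3 = Suc[THEN conjunct2, THEN conjunct2, rule_format]
  have USuc: "U (Suc n) = U n + \<Delta>" by (simp add: U algebra_simps)
  have hgn: "0 \<le> (g (U (Suc n)) - g (U n)) / (\<rho> - 1)" "(g (U (Suc n)) - g (U n)) / (\<rho> - 1) \<le> \<Delta>"
    using hg[of "U n" "U (Suc n)"] dp USuc by auto
  have UV: "U n \<le> V n" "V n \<le> U (Suc n)" using hgn by (auto simp: V USuc)
  have VU: "(\<rho> - 1) * (U n - V n) = - (g (U (Suc n)) - g (U n))" using r1 by (simp add: V)
  have gb: "\<bar>g u' - g u\<bar> \<le> \<bar>\<rho> - 1\<bar> * (u' - u)" if "u \<le> u'" for u u'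
    using g_abs_bound[OF hg r1 that] by blast
  show ?case
  proof (intro conjI allI impI)
    fix u assume au: "a \<le> u" and uS: "u \<le> U (Suc n)"
    show "\<bar>Xc U V \<rho> (Suc n) u - (u + g u - g (U (Suc n)))\<bar> \<le> 2 * \<bar>\<rho> - 1\<bar> * \<Delta>"
    proof (cases "u \<le> U n")
      case True
      have "Xc U V \<rho> n u \<le> Xc U V \<rho> n (U n)" using IH3 True by blast
      also have "\<dots> = U n" using IH2 by simp
      finally have "min (max (Xc U V \<rho> n u) (U n)) (V n) = U n" using UV by simp
      then have "Xc U V \<rho> (Suc n) u = Xc U V \<rho> n u - (g (U (Suc n)) - g (U n))"
        using VU by (simp add: bmp_def)
      then have "Xc U V \<rho> (Suc n) u - (u + g u - g (U (Suc n))) = Xc U V \<rho> n u - (u + g u - g (U n))"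
        by simp
      then show ?thesis using IH1[OF au True] by simp
    next
      case False
      then have X: "Xc U V \<rho> n u = u" using IH2 by simp
      define c where "c = min (max u (U n)) (V n)"
      have c: "U n \<le> c" "c \<le> V n" using UV by (auto simp: c_def)
      have e: "Xc U V \<rho> (Suc n) u - (u + g u - g (U (Suc n))) = (\<rho> - 1) * (c - V n) + (g (U (Suc n)) - g u)"
        by (simp add: X bmp_def c_def)
      have "\<bar>(\<rho> - 1) * (c - V n)\<bar> \<le> \<bar>\<rho> - 1\<bar> * (V n - U n)"
        using c by (simp add: abs_mult mult_left_mono)
      also have "\<dots> = \<bar>(\<rho> - 1) * (U n - V n)\<bar>" using UV by (simp add: abs_mult)
      also have "\<dots> = \<bar>g (U (Suc n)) - g (U n)\<bar>" using VU by simp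
      also have "\<dots> \<le> \<bar>\<rho> - 1\<bar> * \<Delta>" using gb[of "U n" "U (Suc n)"] dp by (simp add: USuc)
      finally have 1: "\<bar>(\<rho> - 1) * (c - V n)\<bar> \<le> \<bar>\<rho> - 1\<bar> * \<Delta>" .
      have "\<bar>g (U (Suc n)) - g u\<bar> \<le> \<bar>\<rho> - 1\<bar> * (U (Suc n) - u)" using gb uS by blast
      also have "\<dots> \<le> \<bar>\<rho> - 1\<bar> * \<Delta>" using False by (intro mult_left_mono) (auto simp: USuc)
      finally have 2: "\<bar>g (U (Suc n)) - g u\<bar> \<le> \<bar>\<rho> - 1\<bar> * \<Delta>" .
      show ?thesis unfolding e using 1 2 by linarith
    qed
  next
    fix u assume uS: "U (Suc n) \<le> u"
    then have "Xc U V \<rho> n u = u" using IH2 USuc dp by simp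
    moreover have "min (max u (U n)) (V n) = V n" using uS UV by simp
    ultimately show "Xc U V \<rho> (Suc n) u = u" by (simp add: bmp_def)
  next
    fix u u' :: real assume "u \<le> u'"
    then show "Xc U V \<rho> (Suc n) u \<le> Xc U V \<rho> (Suc n) u'"
      using IH3 bmp_mono[OF rp UV(1)] by simp
  qed
qed

definition Acl :: "real \<Rightarrow> (real ^ 'n \<Rightarrow> real ^ 'n) set" where
  "Acl \<alpha> = {f. continuous_on UNIV f \<and> (\<forall>K e. compact K \<longrightarrow> e > 0 \<longrightarrow>
      (\<exists>G\<in>Rcl \<alpha>. \<forall>x\<in>K. norm (f x - G x) < e))}"

lemma Acl_dir:
  fixes l p :: "real^'n" and g :: "real \<Rightarrow> real"
  assumes lp: "l \<bullet> p = 1" and a: "\<alpha> > 0" and r: "\<rho> = \<alpha> \<or> \<rho> = 1/\<alpha>" and r1: "\<rho> \<noteq> 1"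
    and cg: "continuous_on UNIV g"
    and hg: "\<And>u u'. u \<le> u' \<Longrightarrow> 0 \<le> (g u' - g u) / (\<rho> - 1) \<and> (g u' - g u) / (\<rho> - 1) \<le> u' - u"
  shows "dirmap l p (\<lambda>u. u + g u) \<in> Acl \<alpha>"
  unfolding Acl_def
proof (intro CollectI conjI allI impI)
  have "continuous_on UNIV (\<lambda>y. g (l \<bullet> y))"
    by (rule continuous_on_compose2[OF cg]) (auto intro: continuous_intros)
  then show "continuous_on UNIV (dirmap l p (\<lambda>u. u + g u))"
    unfolding dirmap_def by (intro continuous_intros)
  fix K :: "(real^'n) set" and e :: real
  assume K: "compact K" and e: "e > 0"
  have rp: "\<rho> > 0" using r a by auto
  obtain R where R: "\<forall>y\<in>K. norm y \<le> R" using compact_imp_bounded[OF K] bounded_iff by metis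
  define R' where "R' = norm l * \<bar>R\<bar>"
  have lR: "\<bar>l \<bullet> y\<bar> \<le> R'" if "y \<in> K" for y
  proof -
    have "\<bar>l \<bullet> y\<bar> \<le> norm l * norm y" by (rule Cauchy_Schwarz_ineq2)
    also have "\<dots> \<le> norm l * \<bar>R\<bar>" using R that by (intro mult_left_mono) auto
    finally show ?thesis by (simp add: R'_def)
  qed
  have R'0: "R' \<ge> 0" by (simp add: R'_def)
  define A where "A = 2 * \<bar>\<rho> - 1\<bar> * (2 * R' + 2) * norm p"
  obtain m where m: "A / e < real m" using reals_Archimedean2 by blast
  define N where "N = Suc m"
  have N: "A / e < real N" "real N > 0" using m by (auto simp: N_def)
  define \<Delta> where "\<Delta> = (2 * R' + 2) / real N"
  have dp: "\<Delta> > 0" using R'0 N by (simp add: \<Delta>_def)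
  define aa where "aa = - R' - 1"
  define U where "U = (\<lambda>j. aa + real j * \<Delta>)"
  define V where "V = (\<lambda>j. U j + (g (U (Suc j)) - g (U j)) / (\<rho> - 1))"
  note XI = Xc_interp[OF rp r1 dp hg U_def V_def, of N]
  have UN: "U N = R' + 1" using N by (simp add: U_def \<Delta>_def aa_def)
  have UVall: "U j \<le> V j" for j using hg[of "U j" "U (Suc j)"] dp by (auto simp: V_def U_def algebra_simps)
  define G where "G = (\<lambda>y. id (dirmap l p (Xc U V \<rho> N) y) + g (U N) *\<^sub>R p)"
  show "\<exists>G\<in>Rcl \<alpha>. \<forall>x\<in>K. norm (dirmap l p (\<lambda>u. u + g u) x - G x) < e"
  proof (intro bexI ballI)
    show "G \<in> Rcl \<alpha>" unfolding G_def
      by (rule Rcl_comp'[OF Rcl_Xc[OF lp a r UVall] Rcl_affine[OF linear_id]])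
    fix y assume y: "y \<in> K"
    have u1: "aa \<le> l \<bullet> y" "l \<bullet> y \<le> U N" using lR[OF y] by (auto simp: aa_def UN)
    have "dirmap l p (\<lambda>u. u + g u) y - G y
       = ((l \<bullet> y + g (l \<bullet> y) - g (U N)) - Xc U V \<rho> N (l \<bullet> y)) *\<^sub>R p"
      by (simp add: G_def dirmap_def algebra_simps)
    then have "norm (dirmap l p (\<lambda>u. u + g u) y - G y)
        = \<bar>Xc U V \<rho> N (l \<bullet> y) - (l \<bullet> y + g (l \<bullet> y) - g (U N))\<bar> * norm p"
      by (simp add: abs_minus_commute)
    also have "\<dots> \<le> (2 * \<bar>\<rho> - 1\<bar> * \<Delta>) * norm p"
      using XI u1 by (intro mult_right_mono) auto
    also have "\<dots> = A / real N" by (simp add: A_def \<Delta>_def)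
    also have "\<dots> < e" using N e by (simp add: divide_less_eq mult.commute pos_divide_less_eq)
    finally show "norm (dirmap l p (\<lambda>u. u + g u) y - G y) < e" .
  qed
qed



lemma AclD: "f \<in> Acl \<alpha> \<Longrightarrow> compact K \<Longrightarrow> e > 0 \<Longrightarrow> \<exists>G\<in>Rcl \<alpha>. \<forall>x\<in>K. norm (f x - G x) < e"
  unfolding Acl_def by blast

lemma Acl_cont: "f \<in> Acl \<alpha> \<Longrightarrow> continuous_on UNIV f"
  unfolding Acl_def by blast

lemma tri3: fixes a b c :: "'a::real_normed_vector"
  shows "norm (a - c) \<le> norm (a - b) + norm (b - c)"
proof -
  have "a - c = (a - b) + (b - c)" by simp
  then show ?thesis by (metis norm_triangle_ineq)
qed

lemma Rcl_Acl: "G \<in> Rcl \<alpha> \<Longrightarrow> G \<in> Acl \<alpha>"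
  unfolding Acl_def
proof (intro CollectI conjI allI impI)
  assume G: "G \<in> Rcl \<alpha>"
  then show "continuous_on UNIV G" by (simp add: Rcl_def)
  fix K :: "(real^'a) set" and e :: real assume "compact K" "e > 0"
  then show "\<exists>G'\<in>Rcl \<alpha>. \<forall>x\<in>K. norm (G x - G' x) < e" using G by (intro bexI[of _ G]) auto
qed

lemma Acl_comp:
  fixes f g :: "real^'n \<Rightarrow> real^'n"
  assumes f: "f \<in> Acl \<alpha>" and g: "g \<in> Acl \<alpha>"
  shows "(\<lambda>x. g (f x)) \<in> Acl \<alpha>"
  unfolding Acl_def
proof (intro CollectI conjI allI impI)
  have cf: "continuous_on UNIV f" and cg: "continuous_on UNIV g" using f g by (auto intro: Acl_cont)
  then show "continuous_on UNIV (\<lambda>x. g (f x))"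
    by (metis continuous_on_compose2 subset_UNIV)
  fix K :: "(real^'n) set" and e :: real assume K: "compact K" and e: "e > 0"
  have "compact (f ` K)" using cf K by (metis compact_continuous_image continuous_on_subset subset_UNIV)
  then obtain R where R: "\<forall>z\<in>f ` K. norm z \<le> R" using compact_imp_bounded bounded_iff by metis
  define K' :: "(real^'n) set" where "K' = cball 0 (R + 1)"
  have K': "compact K'" by (simp add: K'_def)
  have "uniformly_continuous_on K' g"
    using cg K' by (metis compact_uniformly_continuous continuous_on_subset subset_UNIV)
  then obtain d where d: "d > 0" "\<forall>x\<in>K'. \<forall>x'\<in>K'. dist x' x < d \<longrightarrow> dist (g x') (g x) < e/2"
    unfolding uniformly_continuous_on_def using e by (metis half_gt_zero)
  obtain G2 where G2: "G2 \<in> Rcl \<alpha>" "\<forall>z\<in>K'. norm (g z - G2 z) < e/2"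
    using AclD[OF g K', of "e/2"] e by auto
  obtain F where F: "F \<in> Rcl \<alpha>" "\<forall>x\<in>K. norm (f x - F x) < min d 1"
    using AclD[OF f K, of "min d 1"] d by auto
  show "\<exists>G\<in>Rcl \<alpha>. \<forall>x\<in>K. norm (g (f x) - G x) < e"
  proof (intro bexI ballI)
    show "(\<lambda>x. G2 (F x)) \<in> Rcl \<alpha>" by (rule Rcl_comp'[OF F(1) G2(1)])
    fix x assume x: "x \<in> K"
    have fx: "f x \<in> K'" using R x by (auto simp: K'_def)
    have "norm (F x) \<le> norm (f x) + norm (f x - F x)" using tri3[of "F x" 0 "f x"] tri3[of "F x" "f x" 0] by (simp add: norm_minus_commute)
    moreover have "norm (f x) \<le> R" "norm (f x - F x) < 1" using R x F(2) by auto
    ultimately have Fx: "F x \<in> K'" by (simp add: K'_def)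
    have "dist (g (F x)) (g (f x)) < e/2" using d(2) fx Fx F(2) x by (simp add: dist_norm norm_minus_commute)
    then have 1: "norm (g (f x) - g (F x)) < e/2" by (simp add: dist_norm norm_minus_commute)
    have 2: "norm (g (F x) - G2 (F x)) < e/2" using G2(2) Fx by blast
    have "norm (g (f x) - G2 (F x)) \<le> norm (g (f x) - g (F x)) + norm (g (F x) - G2 (F x))"
      by (rule tri3)
    then show "norm (g (f x) - G2 (F x)) < e" using 1 2 by linarith
  qed
qed

lemma Acl_limit:
  fixes f :: "real^'n \<Rightarrow> real^'n"
  assumes cf: "continuous_on UNIV f"
    and ap: "\<And>e. e > 0 \<Longrightarrow> \<exists>f'\<in>Acl \<alpha>. \<forall>x. norm (f x - f' x) < e"
  shows "f \<in> Acl \<alpha>"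
  unfolding Acl_def
proof (intro CollectI conjI allI impI)
  show "continuous_on UNIV f" by fact
  fix K :: "(real^'n) set" and e :: real assume K: "compact K" and e: "e > 0"
  obtain f' where f': "f' \<in> Acl \<alpha>" "\<forall>x. norm (f x - f' x) < e/2" using ap[of "e/2"] e by auto
  obtain G where G: "G \<in> Rcl \<alpha>" "\<forall>x\<in>K. norm (f' x - G x) < e/2"
    using AclD[OF f'(1) K, of "e/2"] e by auto
  show "\<exists>G\<in>Rcl \<alpha>. \<forall>x\<in>K. norm (f x - G x) < e"
  proof (intro bexI ballI)
    show "G \<in> Rcl \<alpha>" by fact
    fix x assume "x \<in> K"
    then have "norm (f x - f' x) < e/2" "norm (f' x - G x) < e/2" using f' G by auto
    moreover have "norm (f x - G x) \<le> norm (f x - f' x) + norm (f' x - G x)"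
      by (rule tri3)
    ultimately show "norm (f x - G x) < e" by linarith
  qed
qed



lemma tanh_lip: fixes x y :: real assumes "x \<le> y"
  shows "0 \<le> tanh y - tanh x \<and> tanh y - tanh x \<le> y - x"
proof (cases "x = y")
  case True then show ?thesis by simp
next
  case False
  then have xy: "x < y" using assms by simp
  have d: "\<And>z. x \<le> z \<Longrightarrow> z \<le> y \<Longrightarrow> DERIV tanh z :> (1 - tanh z ^ 2)"
    by (auto intro!: derivative_eq_intros simp: cosh_real_pos[THEN less_imp_neq] ) 
  obtain z where "tanh y - tanh x = (y - x) * (1 - tanh z ^ 2)"
    using MVT2[OF xy d] by blast
  moreover have "0 \<le> 1 - tanh z ^ 2" "1 - tanh z ^ 2 \<le> 1"
    using tanh_real_bounds[of z] by (auto simp: abs_square_le_1)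
  ultimately show ?thesis using xy by (simp add: mult_left_le)
qed

lemma tanh_abs_diff: "\<bar>tanh (x::real) - tanh y\<bar> \<le> \<bar>x - y\<bar>"
  using tanh_lip[of x y] tanh_lip[of y x] by (cases "x \<le> y") auto

lemma tanh_abs_le1: "\<bar>tanh (x::real)\<bar> \<le> 1"
  using tanh_real_bounds[of x] by auto

lemma cosh_ne0: "cosh (x::real) \<noteq> 0"
  using cosh_real_pos[of x] by linarith

definition ridge :: "real^'n \<Rightarrow> real^'n \<Rightarrow> real \<Rightarrow> real \<Rightarrow> real^'n \<Rightarrow> real^'n" where
  "ridge c w \<beta> h y = y + (h * tanh (w \<bullet> y + \<beta>)) *\<^sub>R c"

definition theta :: "real \<Rightarrow> real" where
  "theta \<alpha> = min \<bar>\<alpha> - 1\<bar> \<bar>1/\<alpha> - 1\<bar>"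

lemma theta_pos: "\<alpha> > 0 \<Longrightarrow> \<alpha> \<noteq> 1 \<Longrightarrow> theta \<alpha> > 0"
  by (auto simp: theta_def field_simps)

lemma rho_gt1: assumes "\<alpha> > 0" "\<alpha> \<noteq> 1"
  shows "\<exists>\<rho>. (\<rho> = \<alpha> \<or> \<rho> = 1/\<alpha>) \<and> \<rho> > 1 \<and> \<rho> - 1 \<ge> theta \<alpha>"
proof (cases "\<alpha> > 1")
  case True then show ?thesis by (intro exI[of _ \<alpha>]) (auto simp: theta_def)
next
  case False
  then have "\<alpha> < 1" using assms by auto
  then have "1/\<alpha> > 1" using assms by (simp add: field_simps)
  then show ?thesis by (intro exI[of _ "1/\<alpha>"]) (auto simp: theta_def)
qed

lemma rho_lt1: assumes "\<alpha> > 0" "\<alpha> \<noteq> 1"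
  shows "\<exists>\<rho>. (\<rho> = \<alpha> \<or> \<rho> = 1/\<alpha>) \<and> \<rho> < 1 \<and> 1 - \<rho> \<ge> theta \<alpha>"
proof (cases "\<alpha> > 1")
  case True
  then have "1/\<alpha> < 1" using assms by (simp add: field_simps)
  then show ?thesis by (intro exI[of _ "1/\<alpha>"]) (auto simp: theta_def)
next
  case False
  then have "\<alpha> < 1" using assms by auto
  then show ?thesis by (intro exI[of _ \<alpha>]) (auto simp: theta_def)
qed

lemma frac01: fixes X Y :: real shows "0 \<le> X \<Longrightarrow> X \<le> Y \<Longrightarrow> 0 < Y \<Longrightarrow> 0 \<le> X / Y \<and> X / Y \<le> 1"
  by simp

lemma Acl_ridge_dir:
  fixes c w :: "real^'n"
  assumes a: "\<alpha> > 0" "\<alpha> \<noteq> 1" and h: "h \<ge> 0" and wc: "w \<bullet> c \<noteq> 0"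
    and small: "\<bar>w \<bullet> c\<bar> * h \<le> theta \<alpha>"
  shows "ridge c w \<beta> h \<in> Acl \<alpha>"
proof -
  define \<mu> where "\<mu> = w \<bullet> c"
  define p where "p = (1/\<mu>) *\<^sub>R c"
  define g where "g u = \<mu> * h * tanh (u + \<beta>)" for u
  have mu: "\<mu> \<noteq> 0" using wc by (simp add: \<mu>_def)
  have lp: "w \<bullet> p = 1" using mu by (simp add: p_def \<mu>_def)
  have eq: "ridge c w \<beta> h = dirmap w p (\<lambda>u. u + g u)"
  proof (rule ext)
    fix y
    have "(\<mu> * h * tanh (w \<bullet> y + \<beta>)) * (1/\<mu>) = h * tanh (w \<bullet> y + \<beta>)" using mu by simp
    then show "ridge c w \<beta> h y = dirmap w p (\<lambda>u. u + g u) y"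
      by (simp add: ridge_def dirmap_def g_def p_def)
  qed
  have cg: "continuous_on UNIV g" unfolding g_def by (intro continuous_intros) (auto simp: cosh_ne0)
  obtain \<rho> where r: "\<rho> = \<alpha> \<or> \<rho> = 1/\<alpha>" and hr: "\<mu> * h / (\<rho> - 1) \<ge> 0" "\<mu> * h / (\<rho> - 1) \<le> 1" and r1: "\<rho> \<noteq> 1"
  proof (cases "\<mu> > 0")
    case True
    obtain \<rho> where r: "\<rho> = \<alpha> \<or> \<rho> = 1/\<alpha>" "\<rho> > 1" "\<rho> - 1 \<ge> theta \<alpha>" using rho_gt1[OF a] by blast
    have "\<bar>\<mu>\<bar> * h \<le> theta \<alpha>" using small by (simp add: \<mu>_def)
    moreover have "\<bar>\<mu>\<bar> * h = \<mu> * h" using True by simp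
    ultimately have "\<mu> * h \<le> \<rho> - 1" using r by linarith
    moreover have "\<mu> * h \<ge> 0" using True h by simp
    moreover have "\<rho> - 1 > 0" using r by simp
    ultimately have "\<mu> * h / (\<rho> - 1) \<ge> 0" "\<mu> * h / (\<rho> - 1) \<le> 1"
      using frac01[of "\<mu> * h" "\<rho> - 1"] by simp_all
    then show ?thesis using that[of \<rho>] r by simp
  next
    case False
    then have m: "\<mu> < 0" using mu by simp
    obtain \<rho> where r: "\<rho> = \<alpha> \<or> \<rho> = 1/\<alpha>" "\<rho> < 1" "1 - \<rho> \<ge> theta \<alpha>" using rho_lt1[OF a] by blast
    have "\<bar>\<mu>\<bar> * h \<le> theta \<alpha>" using small by (simp add: \<mu>_def)
    moreover have "\<bar>\<mu>\<bar> * h = - \<mu> * h" using m by simp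
    ultimately have "- \<mu> * h \<le> 1 - \<rho>" using r by linarith
    moreover have "\<mu> * h / (\<rho> - 1) = (- \<mu> * h) / (1 - \<rho>)"
      by (metis minus_diff_eq minus_divide_divide mult_minus_left)
    moreover have "- \<mu> * h \<ge> 0" using m h by (simp add: mult_nonpos_nonneg)
    moreover have "1 - \<rho> > 0" using r by simp
    ultimately have "\<mu> * h / (\<rho> - 1) \<ge> 0" "\<mu> * h / (\<rho> - 1) \<le> 1"
      using frac01[of "- \<mu> * h" "1 - \<rho>"] by simp_all
    then show ?thesis using that[of \<rho>] r by simp
  qed
  have hg: "0 \<le> (g u' - g u) / (\<rho> - 1) \<and> (g u' - g u) / (\<rho> - 1) \<le> u' - u" if uu: "u \<le> u'" for u u'
  proof -
    define D where "D = tanh (u' + \<beta>) - tanh (u + \<beta>)"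
    have D: "0 \<le> D" "D \<le> u' - u" using tanh_lip[of "u + \<beta>" "u' + \<beta>"] uu by (auto simp: D_def)
    have "g u' - g u = (\<mu> * h) * D" unfolding g_def D_def by (simp add: right_diff_distrib)
    then have "(g u' - g u) / (\<rho> - 1) = (\<mu> * h / (\<rho> - 1)) * D" by simp
    moreover have "(\<mu> * h / (\<rho> - 1)) * D \<le> D" using hr D mult_left_le_one_le by blast
    moreover have "0 \<le> (\<mu> * h / (\<rho> - 1)) * D" using hr D mult_nonneg_nonneg by blast
    ultimately show ?thesis using D by linarith
  qed
  show ?thesis unfolding eq by (rule Acl_dir[OF lp a(1) r r1 cg hg])
qed

lemma small_lambda:
  fixes A B th e :: real
  assumes "A \<ge> 0" "B \<ge> 0" "th > 0" "e > 0"
  shows "\<exists>lam>0. lam * A \<le> th \<and> lam * B < e"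
proof (intro exI conjI)
  define lam where "lam = min (th / (A + 1)) (e / (B + 1))"
  show "lam > 0" using assms by (simp add: lam_def)
  have "lam * A \<le> th / (A + 1) * A" using assms by (intro mult_right_mono) (auto simp: lam_def)
  also have "\<dots> \<le> th" using assms by (simp add: field_simps)
  finally show "lam * A \<le> th" .
  have "lam * B \<le> e / (B + 1) * B" using assms by (intro mult_right_mono) (auto simp: lam_def)
  also have "\<dots> < e" using assms by (simp add: field_simps)
  finally show "lam * B < e" .
qed

lemma Acl_ridge:
  fixes c w :: "real^'n"
  assumes a: "\<alpha> > 0" "\<alpha> \<noteq> 1" and h: "h \<ge> 0"
    and small: "\<bar>w \<bullet> c\<bar> * h \<le> theta \<alpha>"
  shows "ridge c w \<beta> h \<in> Acl \<alpha>"
proof (cases "w = 0")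
  case True
  have "ridge c w \<beta> h = (\<lambda>y. id y + (h * tanh \<beta>) *\<^sub>R c)" using True by (simp add: fun_eq_iff ridge_def)
  then show ?thesis using Rcl_Acl[OF Rcl_affine[OF linear_id]] by metis
next
  case w0: False
  show ?thesis
  proof (cases "w \<bullet> c = 0")
    case False
    then show ?thesis using Acl_ridge_dir[OF a h False small] by blast
  next
    case True
    show ?thesis
    proof (rule Acl_limit)
      show "continuous_on UNIV (ridge c w \<beta> h)" unfolding ridge_def by (intro continuous_intros) (auto simp: cosh_ne0)
      fix e :: real assume e: "e > 0"
      have ww: "w \<bullet> w > 0" using w0 by simp
      obtain lam where l: "lam > 0" "lam * ((w \<bullet> w) * h) \<le> theta \<alpha>" "lam * (2 * h * norm w) < e"
        using small_lambda[of "(w \<bullet> w) * h" "2 * h * norm w" "theta \<alpha>" e] ww h e theta_pos[OF a] by auto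
      define c1 where "c1 = c + lam *\<^sub>R w"
      define c2 where "c2 = - (lam *\<^sub>R w)"
      have wc1: "w \<bullet> c1 = lam * (w \<bullet> w)" using True by (simp add: c1_def inner_add_right)
      have wc2: "w \<bullet> c2 = - (lam * (w \<bullet> w))" by (simp add: c2_def)
      have A1: "ridge c1 w \<beta> h \<in> Acl \<alpha>"
        by (rule Acl_ridge_dir[OF a h]) (use wc1 l ww in \<open>auto simp: abs_mult mult.assoc\<close>)
      have A2: "ridge c2 w \<beta> h \<in> Acl \<alpha>"
        by (rule Acl_ridge_dir[OF a h]) (use wc2 l ww in \<open>auto simp: abs_mult mult.assoc\<close>)
      show "\<exists>f'\<in>Acl \<alpha>. \<forall>x. norm (ridge c w \<beta> h x - f' x) < e"
      proof (intro bexI allI)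
        show "(\<lambda>y. ridge c2 w \<beta> h (ridge c1 w \<beta> h y)) \<in> Acl \<alpha>" by (rule Acl_comp[OF A1 A2])
        fix y
        define t where "t = tanh (w \<bullet> y + \<beta>)"
        define t' where "t' = tanh (w \<bullet> ridge c1 w \<beta> h y + \<beta>)"
        have "ridge c w \<beta> h y - ridge c2 w \<beta> h (ridge c1 w \<beta> h y) = (h * lam * (t' - t)) *\<^sub>R w"
          by (simp add: ridge_def c1_def c2_def t_def t'_def algebra_simps)
        then have "norm (ridge c w \<beta> h y - ridge c2 w \<beta> h (ridge c1 w \<beta> h y)) = h * lam * \<bar>t' - t\<bar> * norm w"
          using h l by (simp add: abs_mult)
        also have "\<dots> \<le> h * lam * 2 * norm w"
        proof -
          have "\<bar>t' - t\<bar> \<le> 2" using tanh_abs_le1[of "w \<bullet> y + \<beta>"] tanh_abs_le1[of "w \<bullet> ridge c1 w \<beta> h y + \<beta>"]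
            by (simp add: t_def t'_def)
          then show ?thesis using h l by (intro mult_right_mono mult_left_mono) auto
        qed
        also have "\<dots> < e" using l by (simp add: algebra_simps)
        finally show "norm (ridge c w \<beta> h y - ridge c2 w \<beta> h (ridge c1 w \<beta> h y)) < e" .
      qed
    qed
  qed
qed



fun cmpI :: "(nat \<Rightarrow> 'a \<Rightarrow> 'a) \<Rightarrow> nat \<Rightarrow> 'a \<Rightarrow> 'a" where
  "cmpI f 0 y = y"
| "cmpI f (Suc m) y = f m (cmpI f m y)"

lemma sol_diff:
  fixes F :: "real \<Rightarrow> real^'n \<Rightarrow> real^'n" and x :: "real \<Rightarrow> real^'n"
  assumes sol: "\<forall>t\<in>{0..\<tau>}. (\<lambda>s. F s (x s)) integrable_on {0..t} \<and> x t = x0 + integral {0..t} (\<lambda>s. F s (x s))"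
    and uv: "0 \<le> u" "u \<le> v" "v \<le> \<tau>"
  shows "(\<lambda>s. F s (x s)) integrable_on {u..v} \<and> x v - x u = integral {u..v} (\<lambda>s. F s (x s))"
proof -
  have iv: "(\<lambda>s. F s (x s)) integrable_on {0..v}" using sol uv by auto
  have "integral {0..u} (\<lambda>s. F s (x s)) + integral {u..v} (\<lambda>s. F s (x s)) = integral {0..v} (\<lambda>s. F s (x s))"
    by (rule Henstock_Kurzweil_Integration.integral_combine[OF uv(1,2) iv])
  moreover have "x v = x0 + integral {0..v} (\<lambda>s. F s (x s))" "x u = x0 + integral {0..u} (\<lambda>s. F s (x s))"
    using sol uv by auto
  ultimately have "x v - x u = integral {u..v} (\<lambda>s. F s (x s))" by (simp add: algebra_simps)
  moreover have "(\<lambda>s. F s (x s)) integrable_on {u..v}"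
    by (rule integrable_subinterval_real[OF iv]) (use uv in auto)
  ultimately show ?thesis by blast
qed

lemma sol_lip:
  fixes F :: "real \<Rightarrow> real^'n \<Rightarrow> real^'n" and x :: "real \<Rightarrow> real^'n"
  assumes sol: "\<forall>t\<in>{0..\<tau>}. (\<lambda>s. F s (x s)) integrable_on {0..t} \<and> x t = x0 + integral {0..t} (\<lambda>s. F s (x s))"
    and Fb: "\<And>s y. s \<in> {0..\<tau>} \<Longrightarrow> norm (F s y) \<le> B" and B: "B \<ge> 0"
    and uv: "0 \<le> u" "u \<le> v" "v \<le> \<tau>"
  shows "norm (x v - x u) \<le> B * (v - u)"
proof -
  note sd = sol_diff[of \<tau> F x x0 u v, OF sol uv]
  have "((\<lambda>s. F s (x s)) has_integral integral {u..v} (\<lambda>s. F s (x s))) (cbox u v)"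
    using sd by (simp add: integrable_integral)
  then have "norm (integral {u..v} (\<lambda>s. F s (x s))) \<le> B * Henstock_Kurzweil_Integration.content (cbox u v)"
    by (rule has_integral_bound[OF B]) (use Fb uv in auto)
  then show ?thesis using sd uv by simp
qed

lemma tri4: fixes a b c d :: "'a::real_normed_vector"
  shows "norm (a + b - c) \<le> norm a + norm b + norm c"
  using norm_triangle_ineq4[of "a + b" c] norm_triangle_ineq[of a b] by linarith

lemma euler_step:
  fixes F :: "real \<Rightarrow> real^'n \<Rightarrow> real^'n" and x :: "real \<Rightarrow> real^'n" and S :: "real^'n \<Rightarrow> real^'n"
  assumes sol: "\<forall>t\<in>{0..\<tau>}. (\<lambda>s. F s (x s)) integrable_on {0..t} \<and> x t = x0 + integral {0..t} (\<lambda>s. F s (x s))"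
    and Fb: "\<And>s y. s \<in> {0..\<tau>} \<Longrightarrow> norm (F s y) \<le> B" and B: "B \<ge> 0"
    and FL: "\<And>s y z. s \<in> {0..\<tau>} \<Longrightarrow> norm (F s y - F s z) \<le> L * norm (y - z)" and L: "L \<ge> 0"
    and h: "h > 0" and uv: "0 \<le> u" "v = u + h" "v \<le> \<tau>"
    and Sst: "norm (S Y - (Y + h *\<^sub>R F ((u + v)/2) Y)) \<le> C2 * h^2"
    and Smv: "norm (S Y - Y) \<le> B * h"
  shows "norm (x v - S Y) \<le> norm (x u - Y) + 2 * B * h"
    and "(\<And>s y. u < s \<Longrightarrow> s < v \<Longrightarrow> F s y = F ((u + v)/2) y) \<Longrightarrow>
         norm (x v - S Y) \<le> (1 + h * L) * norm (x u - Y) + h^2 * (L * B + C2)"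
proof -
  have uv': "0 \<le> u" "u \<le> v" "v \<le> \<tau>" using uv h by auto
  note sd = sol_diff[of \<tau> F x x0 u v, OF sol uv']
  define I where "I = integral {u..v} (\<lambda>s. F s (x s))"
  have xvu: "x v - x u = I" using sd by (simp add: I_def)
  have "norm (x v - S Y) = norm ((x v - x u) + (x u - Y) - (S Y - Y))" by (simp add: algebra_simps)
  also have "\<dots> \<le> norm (x v - x u) + norm (x u - Y) + norm (S Y - Y)" by (rule tri4)
  also have "\<dots> \<le> B * h + norm (x u - Y) + B * h"
    using sol_lip[of \<tau> F x x0 B u v, OF sol Fb B uv'] Smv uv by auto
  finally show "norm (x v - S Y) \<le> norm (x u - Y) + 2 * B * h" by simp
  assume cst: "\<And>s y. u < s \<Longrightarrow> s < v \<Longrightarrow> F s y = F ((u + v)/2) y"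
  define r where "r = (u + v) / 2"
  have r: "r \<in> {0..\<tau>}" using uv' by (auto simp: r_def)
  have hi: "((\<lambda>s. F s (x s) - F r Y) has_integral (I - h *\<^sub>R F r Y)) (cbox u v)"
  proof -
    have i1: "((\<lambda>s. F s (x s)) has_integral I) {u..v}" using sd by (simp add: I_def integrable_integral)
    have i2: "((\<lambda>s. F r Y) has_integral h *\<^sub>R F r Y) {u..v}"
      using has_integral_const_real[of "F r Y" u v] uv h by simp
    show ?thesis using has_integral_diff[OF i1 i2] by simp
  qed
  have "norm (I - h *\<^sub>R F r Y) \<le> (L * (B * h + norm (x u - Y))) * Henstock_Kurzweil_Integration.content (cbox u v)"
  proof (rule has_integral_bound_spike_finite[OF _ _ hi])
    show "0 \<le> L * (B * h + norm (x u - Y))" using L B h by simp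
    show "finite {u, v}" by simp
    fix s assume s: "s \<in> cbox u v - {u, v}"
    then have s1: "u < s" "s < v" by auto
    have "F s (x s) - F r Y = F r (x s) - F r Y" using cst[OF s1] by (simp add: r_def)
    then have "norm (F s (x s) - F r Y) \<le> L * norm (x s - Y)" using FL[OF r] by simp
    also have "\<dots> \<le> L * (B * h + norm (x u - Y))"
    proof (rule mult_left_mono[OF _ L])
      have "norm (x s - Y) \<le> norm (x s - x u) + norm (x u - Y)" by (rule tri3)
      also have "norm (x s - x u) \<le> B * (s - u)" using sol_lip[of \<tau> F x x0 B u s, OF sol Fb B] uv' s1 by auto
      also have "B * (s - u) \<le> B * h" using B s1 uv by (intro mult_left_mono) auto
      finally show "norm (x s - Y) \<le> B * h + norm (x u - Y)" by simp
    qed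
    finally show "norm (F s (x s) - F r Y) \<le> L * (B * h + norm (x u - Y))" .
  qed
  then have Ib: "norm (I - h *\<^sub>R F r Y) \<le> L * (B * h + norm (x u - Y)) * h" using uv h by simp
  have "norm (x v - S Y) = norm ((x u - Y) + (I - h *\<^sub>R F r Y) - (S Y - (Y + h *\<^sub>R F r Y)))"
    using xvu by (simp add: algebra_simps)
  also have "\<dots> \<le> norm (x u - Y) + norm (I - h *\<^sub>R F r Y) + norm (S Y - (Y + h *\<^sub>R F r Y))" by (rule tri4)
  also have "\<dots> \<le> norm (x u - Y) + L * (B * h + norm (x u - Y)) * h + C2 * h^2"
    using Ib Sst by (simp add: r_def)
  also have "\<dots> = (1 + h * L) * norm (x u - Y) + h^2 * (L * B + C2)"
    by (simp add: algebra_simps power2_eq_square)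
  finally show "norm (x v - S Y) \<le> (1 + h * L) * norm (x u - Y) + h^2 * (L * B + C2)" .
qed

lemma exp_pow_bound:
  fixes h L :: real assumes "h \<ge> 0" "L \<ge> 0"
  shows "(1 + h * L) ^ n \<le> exp (real n * h * L)"
proof -
  have "(1 + h * L) ^ n \<le> exp (h * L) ^ n"
    using assms by (intro power_mono exp_ge_add_one_self) auto
  also have "\<dots> = exp (real n * (h * L))" by (simp add: exp_of_nat_mult)
  finally show ?thesis by (simp add: mult.assoc)
qed

lemma euler_global:
  fixes F :: "real \<Rightarrow> real^'n \<Rightarrow> real^'n" and x :: "real \<Rightarrow> real^'n" and S :: "nat \<Rightarrow> real^'n \<Rightarrow> real^'n"
  assumes tau: "\<tau> > 0" and n: "n > 0" and hdef: "h = \<tau> / real n"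
    and sol: "\<forall>t\<in>{0..\<tau>}. (\<lambda>s. F s (x s)) integrable_on {0..t} \<and> x t = x0 + integral {0..t} (\<lambda>s. F s (x s))"
    and x0: "x 0 = x0"
    and Fb: "\<And>s y. s \<in> {0..\<tau>} \<Longrightarrow> norm (F s y) \<le> B" and B: "B \<ge> 0"
    and FL: "\<And>s y z. s \<in> {0..\<tau>} \<Longrightarrow> norm (F s y - F s z) \<le> L * norm (y - z)" and L: "L \<ge> 0"
    and C2: "C2 \<ge> 0"
    and Sst: "\<And>k y. k < n \<Longrightarrow> norm (S k y - (y + h *\<^sub>R F ((real k * h + real (Suc k) * h)/2) y)) \<le> C2 * h^2"
    and Smv: "\<And>k y. k < n \<Longrightarrow> norm (S k y - y) \<le> B * h"
    and P: "finite P"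
    and const: "\<And>k s y. k < n \<Longrightarrow> (\<forall>q\<in>P. \<not> (real k * h < q \<and> q < real (Suc k) * h)) \<Longrightarrow>
                   real k * h < s \<Longrightarrow> s < real (Suc k) * h \<Longrightarrow> F s y = F ((real k * h + real (Suc k) * h)/2) y"
  shows "norm (x \<tau> - cmpI S n x0) \<le> exp (L * \<tau>) * (h * (\<tau> * (L * B + C2) + 2 * B * real (card P)))"
proof -
  have h: "h > 0" using tau n by (simp add: hdef)
  have nh: "real n * h = \<tau>" using n by (simp add: hdef)
  define sk where "sk k = real k * h" for k
  define bad where "bad k = (\<exists>q\<in>P. sk k < q \<and> q < sk (Suc k))" for k
  define d where "d k = h^2 * (L * B + C2) + (if bad k then 2 * B * h else 0)" for k
  define e where "e k = norm (x (sk k) - cmpI S k x0)" for k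
  have d0: "d k \<ge> 0" for k
  proof -
    have "0 \<le> L * B + C2" using L B C2 by simp
    then have "0 \<le> h^2 * (L * B + C2)" by simp
    moreover have "0 \<le> (if bad k then 2 * B * h else 0)" using B h by simp
    ultimately show ?thesis by (simp add: d_def)
  qed
  have step: "e (Suc k) \<le> (1 + h * L) * e k + d k" if k: "k < n" for k
  proof -
    have le: "sk (Suc k) \<le> \<tau>"
    proof -
      have "real (Suc k) * h \<le> real n * h" using k h by (intro mult_right_mono) auto
      then show ?thesis using nh by (simp add: sk_def)
    qed
    have u0: "0 \<le> sk k" using h by (simp add: sk_def)
    have sv: "sk (Suc k) = sk k + h" by (simp add: sk_def algebra_simps)
    have Sst': "norm (S k (cmpI S k x0) - (cmpI S k x0 + h *\<^sub>R F ((sk k + sk (Suc k))/2) (cmpI S k x0))) \<le> C2 * h^2"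
      using Sst[OF k] by (simp add: sk_def)
    note ES = euler_step[of \<tau> F x x0 B L h "sk k" "sk (Suc k)" "S k" "cmpI S k x0" C2, OF sol Fb B FL L h u0 sv le Sst' Smv[OF k]]
    show ?thesis
    proof (cases "bad k")
      case True
      have "e (Suc k) \<le> e k + 2 * B * h" using ES(1) by (simp add: e_def)
      moreover have "e k \<le> (1 + h * L) * e k"
      proof -
        have "0 \<le> e k" by (simp add: e_def)
        moreover have "0 \<le> h * L" using h L by simp
        ultimately have "0 \<le> (h * L) * e k" by simp
        then show ?thesis by (simp add: algebra_simps)
      qed
      moreover have "2 * B * h \<le> d k"
      proof -
        have "0 \<le> L * B + C2" using L B C2 by simp
        then have "0 \<le> h^2 * (L * B + C2)" by simp
        moreover have "d k = h^2 * (L * B + C2) + 2 * B * h" using True by (simp add: d_def)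
        ultimately show ?thesis by linarith
      qed
      ultimately show ?thesis by linarith
    next
      case False
      have cst: "\<And>s y. sk k < s \<Longrightarrow> s < sk (Suc k) \<Longrightarrow> F s y = F ((sk k + sk (Suc k))/2) y"
      proof -
        have nb: "\<forall>q\<in>P. \<not> (real k * h < q \<and> q < real (Suc k) * h)"
          using False unfolding bad_def sk_def by blast
        fix s y assume "sk k < s" "s < sk (Suc k)"
        then show "F s y = F ((sk k + sk (Suc k))/2) y" using const[OF k nb] unfolding sk_def by blast
      qed
      have "norm (x (sk (Suc k)) - S k (cmpI S k x0)) \<le> (1 + h * L) * norm (x (sk k) - cmpI S k x0) + h^2 * (L * B + C2)"
        by (rule ES(2)) (assumption | rule cst)+
      then have "e (Suc k) \<le> (1 + h * L) * e k + h^2 * (L * B + C2)" by (simp add: e_def)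
      moreover have "h^2 * (L * B + C2) \<le> d k" using B h by (simp add: d_def)
      ultimately show ?thesis by linarith
    qed
  qed
  have gron: "e k \<le> (1 + h * L) ^ k * (\<Sum>j<k. d j)" if "k \<le> n" for k
    using that
  proof (induction k)
    case 0
    then show ?case using x0 by (simp add: e_def sk_def)
  next
    case (Suc k)
    have g1: "1 \<le> 1 + h * L" using h L by simp
    have IH: "e k \<le> (1 + h * L) ^ k * (\<Sum>j<k. d j)" using Suc by simp
    have "e (Suc k) \<le> (1 + h * L) * e k + d k" using step Suc by simp
    also have "\<dots> \<le> (1 + h * L) * ((1 + h * L) ^ k * (\<Sum>j<k. d j)) + (1 + h * L) ^ Suc k * d k"
    proof (rule add_mono)
      show "(1 + h * L) * e k \<le> (1 + h * L) * ((1 + h * L) ^ k * (\<Sum>j<k. d j))"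
        using IH g1 by (intro mult_left_mono) auto
      have "1 \<le> (1 + h * L) ^ Suc k" using g1 by (rule one_le_power)
      then show "d k \<le> (1 + h * L) ^ Suc k * d k" using d0[of k] by (simp add: mult_le_cancel_right1)
    qed
    also have "\<dots> = (1 + h * L) ^ Suc k * (\<Sum>j<Suc k. d j)" by (simp add: algebra_simps)
    finally show ?case .
  qed
  have badcount: "card {k \<in> {..<n}. bad k} \<le> card P"
  proof -
    define qf where "qf k = (SOME q. q \<in> P \<and> sk k < q \<and> q < sk (Suc k))" for k
    have qf: "qf k \<in> P \<and> sk k < qf k \<and> qf k < sk (Suc k)" if "bad k" for k
    proof -
      have "\<exists>q. q \<in> P \<and> sk k < q \<and> q < sk (Suc k)" using that unfolding bad_def by blast
      then show ?thesis unfolding qf_def by (rule someI_ex)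
    qed
    have "inj_on qf {k \<in> {..<n}. bad k}"
    proof (rule inj_onI)
      fix k k' assume kk: "k \<in> {k \<in> {..<n}. bad k}" "k' \<in> {k \<in> {..<n}. bad k}" and eq: "qf k = qf k'"
      have A: "sk k < qf k" "qf k < sk (Suc k)" "sk k' < qf k" "qf k < sk (Suc k')"
        using qf[of k] qf[of k'] kk eq by auto
      show "k = k'"
      proof (rule ccontr)
        assume "k \<noteq> k'"
        then consider "Suc k \<le> k'" | "Suc k' \<le> k" by linarith
        then show False
        proof cases
          case 1
          then have "sk (Suc k) \<le> sk k'" using h by (simp add: sk_def mult_right_mono)
          then show False using A by linarith
        next
          case 2
          then have "sk (Suc k') \<le> sk k" using h by (simp add: sk_def mult_right_mono)
          then show False using A by linarith
        qed
      qed
    qed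
    moreover have "qf ` {k \<in> {..<n}. bad k} \<subseteq> P" using qf by auto
    ultimately show ?thesis using card_inj_on_le P by blast
  qed
  have sumd: "(\<Sum>j<n. d j) \<le> h * (\<tau> * (L * B + C2) + 2 * B * real (card P))"
  proof -
    have "(\<Sum>j<n. d j) = real n * (h^2 * (L * B + C2)) + (\<Sum>j<n. if bad j then 2 * B * h else 0)"
      by (simp add: d_def sum.distrib)
    also have "(\<Sum>j<n. if bad j then 2 * B * h else 0) = (\<Sum>j\<in>{k \<in> {..<n}. bad k}. 2 * B * h)"
      by (rule sum.inter_filter[symmetric]) simp
    also have "\<dots> = 2 * B * h * real (card {k \<in> {..<n}. bad k})" by simp
    also have "\<dots> \<le> 2 * B * h * real (card P)" using badcount B h by (intro mult_left_mono) auto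
    finally have "(\<Sum>j<n. d j) \<le> real n * (h^2 * (L * B + C2)) + 2 * B * h * real (card P)" by simp
    also have "real n * (h^2 * (L * B + C2)) = h * (\<tau> * (L * B + C2))"
      using nh by (simp add: power2_eq_square algebra_simps)
    finally show ?thesis by (simp add: algebra_simps)
  qed
  have "e n \<le> (1 + h * L) ^ n * (\<Sum>j<n. d j)" using gron by simp
  also have "\<dots> \<le> exp (L * \<tau>) * (h * (\<tau> * (L * B + C2) + 2 * B * real (card P)))"
  proof (rule mult_mono)
    show "(1 + h * L) ^ n \<le> exp (L * \<tau>)" using exp_pow_bound[of h L n] h L nh by (simp add: algebra_simps)
    show "(\<Sum>j<n. d j) \<le> h * (\<tau> * (L * B + C2) + 2 * B * real (card P))" by (rule sumd)
    show "0 \<le> exp (L * \<tau>)" by simp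
    show "0 \<le> (\<Sum>j<n. d j)" using d0 by (simp add: sum_nonneg)
  qed
  finally show ?thesis using nh by (simp add: e_def sk_def)
qed



lemma sorted_cover:
  fixes xs :: "real list"
  shows "sorted_wrt (<) xs \<Longrightarrow> xs \<noteq> [] \<Longrightarrow> hd xs \<le> s \<Longrightarrow> s \<le> last xs \<Longrightarrow> s \<notin> set xs \<Longrightarrow>
   \<exists>j. Suc j < length xs \<and> xs ! j < s \<and> s < xs ! (Suc j)"
proof (induction xs)
  case Nil then show ?case by simp
next
  case (Cons x ys)
  have xs: "x < s" using Cons.prems by auto
  have ys: "ys \<noteq> []" using Cons.prems xs by (cases ys) auto
  show ?case
  proof (cases "s < hd ys")
    case True
    then show ?thesis using xs ys by (intro exI[of _ 0]) (auto simp: hd_conv_nth)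
  next
    case False
    then have "hd ys \<le> s" by simp
    moreover have "s \<le> last ys" using Cons.prems ys by simp
    moreover have "sorted_wrt (<) ys" using Cons.prems by simp
    moreover have "s \<notin> set ys" using Cons.prems by simp
    ultimately obtain j where "Suc j < length ys" "ys ! j < s" "s < ys ! Suc j"
      using Cons.IH ys by blast
    then show ?thesis by (intro exI[of _ "Suc j"]) auto
  qed
qed

definition pc_const :: "real \<Rightarrow> real set \<Rightarrow> (real \<Rightarrow> 'a) \<Rightarrow> bool" where
  "pc_const \<tau> P f \<longleftrightarrow> (\<forall>u v. 0 \<le> u \<longrightarrow> u < v \<longrightarrow> v \<le> \<tau> \<longrightarrow> (\<forall>q\<in>P. \<not> (u < q \<and> q < v)) \<longrightarrow>
      (\<forall>s. u < s \<longrightarrow> s < v \<longrightarrow> f s = f ((u + v) / 2)))"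

lemma pc_const_mono: "pc_const \<tau> P f \<Longrightarrow> P \<subseteq> Q \<Longrightarrow> pc_const \<tau> Q f"
  unfolding pc_const_def by blast

lemma pc_good:
  fixes f :: "real \<Rightarrow> 'a::real_normed_vector"
  assumes "piecewise_constant_on \<tau> f"
  shows "\<exists>P. finite P \<and> pc_const \<tau> P f \<and> (\<exists>B. \<forall>s\<in>{0..\<tau>}. norm (f s) \<le> B)"
proof -
  obtain ts :: "real list" where ts: "length ts \<ge> 2" "sorted_wrt (<) ts" "hd ts = 0" "last ts = \<tau>"
    and cst: "\<forall>j < length ts - 1. \<exists>c. \<forall>t \<in> {ts ! j <..< ts ! (j + 1)}. f t = c"
    using assms unfolding piecewise_constant_on_def by blast
  have ne: "ts \<noteq> []" using ts(1) by auto
  have cov: "\<exists>j. Suc j < length ts \<and> ts ! j < s \<and> s < ts ! (Suc j)"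
    if "0 \<le> s" "s \<le> \<tau>" "s \<notin> set ts" for s
    using sorted_cover[OF ts(2) ne] that ts by auto
  have cst': "\<exists>c. \<forall>t. ts ! j < t \<longrightarrow> t < ts ! Suc j \<longrightarrow> f t = c" if "Suc j < length ts" for j
  proof -
    have "j < length ts - 1" using that by simp
    then obtain c where "\<forall>t\<in>{ts ! j <..< ts ! (j + 1)}. f t = c" using cst by blast
    then show ?thesis by auto
  qed
  have pcc: "pc_const \<tau> (set ts) f"
    unfolding pc_const_def
  proof (intro allI impI)
    fix u v s assume u: "0 \<le> u" "u < v" "v \<le> \<tau>" and nq: "\<forall>q\<in>set ts. \<not> (u < q \<and> q < v)"
      and s: "u < s" "s < v"
    define m where "m = (u + v) / 2"
    have m: "u < m" "m < v" using u by (auto simp: m_def)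
    then have "m \<notin> set ts" using nq by auto
    then obtain j where j: "Suc j < length ts" "ts ! j < m" "m < ts ! Suc j" using cov[of m] m u by auto
    obtain c where c: "\<forall>t. ts ! j < t \<longrightarrow> t < ts ! Suc j \<longrightarrow> f t = c" using cst'[OF j(1)] by blast
    have tj: "ts ! j \<in> set ts" "ts ! Suc j \<in> set ts" using j(1) by auto
    have "ts ! j < s"
    proof (rule ccontr)
      assume "\<not> ts ! j < s"
      then have "u < ts ! j" "ts ! j < v" using s j m by auto
      then show False using nq tj by blast
    qed
    moreover have "s < ts ! Suc j"
    proof (rule ccontr)
      assume "\<not> s < ts ! Suc j"
      then have "u < ts ! Suc j" "ts ! Suc j < v" using s j m by auto
      then show False using nq tj by blast
    qed
    ultimately have "f s = c" using c by blast
    moreover have "f m = c" using c j by blast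
    ultimately show "f s = f ((u + v) / 2)" by (simp add: m_def)
  qed
  define S where "S = f ` set ts \<union> (\<lambda>j. f ((ts ! j + ts ! Suc j) / 2)) ` {..<length ts}"
  have "finite S" by (simp add: S_def)
  then obtain B where B: "\<forall>z\<in>S. norm z \<le> B" using finite_imp_bounded bounded_iff by metis
  have "\<forall>s\<in>{0..\<tau>}. norm (f s) \<le> B"
  proof
    fix s assume s: "s \<in> {0..\<tau>}"
    show "norm (f s) \<le> B"
    proof (cases "s \<in> set ts")
      case True then show ?thesis using B by (auto simp: S_def)
    next
      case False
      then obtain j where j: "Suc j < length ts" "ts ! j < s" "s < ts ! Suc j" using cov s by auto
      obtain c where c: "\<forall>t. ts ! j < t \<longrightarrow> t < ts ! Suc j \<longrightarrow> f t = c" using cst'[OF j(1)] by blast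
      have "f s = f ((ts ! j + ts ! Suc j) / 2)" using c j by auto
      moreover have "f ((ts ! j + ts ! Suc j) / 2) \<in> S" using j(1) by (auto simp: S_def)
      ultimately show ?thesis using B by auto
    qed
  qed
  then show ?thesis using pcc by blast
qed

lemma pc_all:
  fixes f :: "nat \<Rightarrow> real \<Rightarrow> 'a::real_normed_vector"
  assumes "finite I" "\<forall>i\<in>I. piecewise_constant_on \<tau> (f i)"
  shows "\<exists>P B. finite P \<and> B \<ge> 0 \<and> (\<forall>i\<in>I. pc_const \<tau> P (f i) \<and> (\<forall>s\<in>{0..\<tau>}. norm (f i s) \<le> B))"
  using assms
proof (induction I rule: finite_induct)
  case empty then show ?case by (intro exI[of _ "{}"] exI[of _ 0]) auto
next
  case (insert i I)
  obtain P B where PB: "finite P" "B \<ge> 0" "\<forall>i\<in>I. pc_const \<tau> P (f i) \<and> (\<forall>s\<in>{0..\<tau>}. norm (f i s) \<le> B)"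
    using insert by auto
  obtain P2 B2 where P2: "finite P2" "pc_const \<tau> P2 (f i)" "\<forall>s\<in>{0..\<tau>}. norm (f i s) \<le> B2"
    using pc_good[of \<tau> "f i"] insert by auto
  show ?case
  proof (intro exI[of _ "P \<union> P2"] exI[of _ "max B B2"] conjI ballI)
    show "finite (P \<union> P2)" using PB P2 by simp
    show "0 \<le> max B B2" using PB by simp
    fix j assume j: "j \<in> insert i I"
    show "pc_const \<tau> (P \<union> P2) (f j)"
      using j PB P2 pc_const_mono by (metis Un_upper1 Un_upper2 insert_iff)
  next
    fix j s assume j: "j \<in> insert i I" and s: "s \<in> {0..\<tau>}"
    show "norm (f j s) \<le> max B B2"
      using j PB P2 s by (auto intro: le_max_iff_disj[THEN iffD2])
  qed
qed



lemma cmpI_Acl: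
  fixes f :: "nat \<Rightarrow> real^'n \<Rightarrow> real^'n"
  assumes "\<And>m. m < N \<Longrightarrow> f m \<in> Acl \<alpha>"
  shows "cmpI f N \<in> Acl \<alpha>"
  using assms
proof (induction N)
  case 0
  have "cmpI f 0 = (\<lambda>y. y)" by (simp add: fun_eq_iff)
  moreover have "(\<lambda>y::real^'n. y) \<in> Rcl \<alpha>" using Rcl_linear[of "\<lambda>y. y"] linear_id[unfolded id_def] by blast
  ultimately show ?case using Rcl_Acl by metis
next
  case (Suc N)
  have "cmpI f (Suc N) = (\<lambda>y. f N (cmpI f N y))" by (simp add: fun_eq_iff)
  moreover have "(\<lambda>y. f N (cmpI f N y)) \<in> Acl \<alpha>" using Suc by (rule_tac Acl_comp) auto
  ultimately show ?case by metis
qed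

lemma field_bound:
  fixes a w :: "nat \<Rightarrow> real \<Rightarrow> real^'n" and b :: "nat \<Rightarrow> real \<Rightarrow> real"
  assumes Ba: "\<forall>i\<in>{1..M}. norm (a i s) \<le> Ba"
  shows "norm (tanh_field M a w b s y) \<le> real M * Ba"
proof -
  have "norm (tanh_field M a w b s y) \<le> (\<Sum>i=1..M. Ba)"
    unfolding tanh_field_def
  proof (rule sum_norm_le)
    fix i assume i: "i \<in> {1..M}"
    have "norm (tanh (w i s \<bullet> y + b i s) *\<^sub>R a i s) = \<bar>tanh (w i s \<bullet> y + b i s)\<bar> * norm (a i s)" by simp
    also have "\<dots> \<le> 1 * Ba" using tanh_abs_le1 Ba i by (intro mult_mono) auto
    finally show "norm (tanh (w i s \<bullet> y + b i s) *\<^sub>R a i s) \<le> Ba" by simp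
  qed
  then show ?thesis by simp
qed

lemma field_lip:
  fixes a w :: "nat \<Rightarrow> real \<Rightarrow> real^'n" and b :: "nat \<Rightarrow> real \<Rightarrow> real"
  assumes Ba: "\<forall>i\<in>{1..M}. norm (a i s) \<le> Ba" and Bw: "\<forall>i\<in>{1..M}. norm (w i s) \<le> Bw" and Bw0: "Bw \<ge> 0"
  shows "norm (tanh_field M a w b s y - tanh_field M a w b s z) \<le> (real M * Ba * Bw) * norm (y - z)"
proof -
  have "tanh_field M a w b s y - tanh_field M a w b s z
      = (\<Sum>i=1..M. (tanh (w i s \<bullet> y + b i s) - tanh (w i s \<bullet> z + b i s)) *\<^sub>R a i s)"
    unfolding tanh_field_def by (simp add: sum_subtractf[symmetric] scaleR_diff_left)
  also have "norm \<dots> \<le> (\<Sum>i=1..M. Ba * Bw * norm (y - z))"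
  proof (rule sum_norm_le)
    fix i assume i: "i \<in> {1..M}"
    have "\<bar>tanh (w i s \<bullet> y + b i s) - tanh (w i s \<bullet> z + b i s)\<bar> \<le> \<bar>w i s \<bullet> y - w i s \<bullet> z\<bar>"
      using tanh_abs_diff[of "w i s \<bullet> y + b i s" "w i s \<bullet> z + b i s"] by simp
    also have "\<dots> = \<bar>w i s \<bullet> (y - z)\<bar>" by (simp add: inner_diff_right)
    also have "\<dots> \<le> norm (w i s) * norm (y - z)" by (rule Cauchy_Schwarz_ineq2)
    also have "\<dots> \<le> Bw * norm (y - z)" using Bw i by (intro mult_right_mono) auto
    finally have t: "\<bar>tanh (w i s \<bullet> y + b i s) - tanh (w i s \<bullet> z + b i s)\<bar> \<le> Bw * norm (y - z)" .
    have "norm ((tanh (w i s \<bullet> y + b i s) - tanh (w i s \<bullet> z + b i s)) *\<^sub>R a i s)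
        = \<bar>tanh (w i s \<bullet> y + b i s) - tanh (w i s \<bullet> z + b i s)\<bar> * norm (a i s)" by simp
    also have "\<dots> \<le> (Bw * norm (y - z)) * Ba" using t Ba i Bw0 by (intro mult_mono) auto
    finally show "norm ((tanh (w i s \<bullet> y + b i s) - tanh (w i s \<bullet> z + b i s)) *\<^sub>R a i s) \<le> Ba * Bw * norm (y - z)"
      by (simp add: algebra_simps)
  qed
  finally show ?thesis by (simp add: algebra_simps)
qed

lemma split_err:
  fixes c w :: "nat \<Rightarrow> real^'n" and \<beta> :: "nat \<Rightarrow> real"
  assumes h: "h \<ge> 0" and Ba: "Ba \<ge> 0" and Bw: "Bw \<ge> 0"
    and bd: "\<And>i. i < m \<Longrightarrow> norm (c i) \<le> Ba \<and> norm (w i) \<le> Bw"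
  shows "norm (cmpI (\<lambda>i. ridge (c i) (w i) (\<beta> i) h) m y - y) \<le> real m * h * Ba \<and>
         norm (cmpI (\<lambda>i. ridge (c i) (w i) (\<beta> i) h) m y - (y + h *\<^sub>R (\<Sum>i<m. tanh (w i \<bullet> y + \<beta> i) *\<^sub>R c i)))
            \<le> real m * real m * h^2 * Ba^2 * Bw"
  using bd
proof (induction m)
  case 0 then show ?case by simp
next
  case (Suc m)
  define Z where "Z = cmpI (\<lambda>i. ridge (c i) (w i) (\<beta> i) h) m y"
  have IH: "norm (Z - y) \<le> real m * h * Ba"
    "norm (Z - (y + h *\<^sub>R (\<Sum>i<m. tanh (w i \<bullet> y + \<beta> i) *\<^sub>R c i))) \<le> real m * real m * h^2 * Ba^2 * Bw"
    using Suc by (auto simp: Z_def)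
  have cm: "norm (c m) \<le> Ba" "norm (w m) \<le> Bw" using Suc.prems by auto
  define t where "t = tanh (w m \<bullet> Z + \<beta> m)"
  define t0 where "t0 = tanh (w m \<bullet> y + \<beta> m)"
  have Z': "cmpI (\<lambda>i. ridge (c i) (w i) (\<beta> i) h) (Suc m) y = Z + (h * t) *\<^sub>R c m"
    by (simp add: Z_def ridge_def t_def)
  have a1: "norm ((h * t) *\<^sub>R c m) \<le> h * Ba"
  proof -
    have "norm ((h * t) *\<^sub>R c m) = h * \<bar>t\<bar> * norm (c m)" using h by (simp add: abs_mult)
    also have "\<dots> \<le> h * 1 * Ba" using h cm tanh_abs_le1[of "w m \<bullet> Z + \<beta> m"]
      by (intro mult_mono mult_left_mono) (auto simp: t_def)
    finally show ?thesis by simp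
  qed
  have "norm (Z + (h * t) *\<^sub>R c m - y) \<le> norm (Z - y) + norm ((h * t) *\<^sub>R c m)"
  proof -
    have "Z + (h * t) *\<^sub>R c m - y = (Z - y) + (h * t) *\<^sub>R c m" by simp
    then show ?thesis using norm_triangle_ineq[of "Z - y" "(h * t) *\<^sub>R c m"] by metis
  qed
  also have "\<dots> \<le> real m * h * Ba + h * Ba" using IH a1 by linarith
  finally have P1: "norm (Z + (h * t) *\<^sub>R c m - y) \<le> real (Suc m) * h * Ba" by (simp add: algebra_simps)
  have tt: "\<bar>t - t0\<bar> \<le> Bw * (real m * h * Ba)"
  proof -
    have "\<bar>t - t0\<bar> \<le> \<bar>w m \<bullet> Z - w m \<bullet> y\<bar>" using tanh_abs_diff[of "w m \<bullet> Z + \<beta> m" "w m \<bullet> y + \<beta> m"]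
      by (simp add: t_def t0_def)
    also have "\<dots> = \<bar>w m \<bullet> (Z - y)\<bar>" by (simp add: inner_diff_right)
    also have "\<dots> \<le> norm (w m) * norm (Z - y)" by (rule Cauchy_Schwarz_ineq2)
    also have "\<dots> \<le> Bw * (real m * h * Ba)" using cm IH Bw by (intro mult_mono) auto
    finally show ?thesis .
  qed
  define E where "E = Z - (y + h *\<^sub>R (\<Sum>i<m. tanh (w i \<bullet> y + \<beta> i) *\<^sub>R c i))"
  have "Z + (h * t) *\<^sub>R c m - (y + h *\<^sub>R (\<Sum>i<Suc m. tanh (w i \<bullet> y + \<beta> i) *\<^sub>R c i))
        = E + (h * (t - t0)) *\<^sub>R c m"
    by (simp add: E_def t0_def algebra_simps scaleR_add_right)
  then have "norm (Z + (h * t) *\<^sub>R c m - (y + h *\<^sub>R (\<Sum>i<Suc m. tanh (w i \<bullet> y + \<beta> i) *\<^sub>R c i)))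
        \<le> norm E + norm ((h * (t - t0)) *\<^sub>R c m)"
    using norm_triangle_ineq[of E "(h * (t - t0)) *\<^sub>R c m"] by metis
  also have "norm ((h * (t - t0)) *\<^sub>R c m) \<le> h * (Bw * (real m * h * Ba)) * Ba"
  proof -
    have "norm ((h * (t - t0)) *\<^sub>R c m) = h * \<bar>t - t0\<bar> * norm (c m)" using h by (simp add: abs_mult)
    also have "\<dots> \<le> h * (Bw * (real m * h * Ba)) * Ba" using tt cm h Ba
      by (intro mult_mono mult_left_mono) auto
    finally show ?thesis .
  qed
  also have "norm E + h * (Bw * (real m * h * Ba)) * Ba \<le> real m * real m * h^2 * Ba^2 * Bw + real m * h^2 * Ba^2 * Bw"
    using IH(2) by (simp add: E_def power2_eq_square algebra_simps)
  also have "\<dots> \<le> real (Suc m) * real (Suc m) * h^2 * Ba^2 * Bw"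
  proof -
    have "0 \<le> h^2 * Ba^2 * Bw" using Bw by simp
    then have "(real m * real m + real m) * (h^2 * Ba^2 * Bw) \<le> (real (Suc m) * real (Suc m)) * (h^2 * Ba^2 * Bw)"
      by (intro mult_right_mono) (auto simp: algebra_simps)
    then show ?thesis by (simp add: algebra_simps)
  qed
  finally show ?case using P1 Z' by simp
qed



lemma sum_shift1: "(\<Sum>i=1..M. g i) = (\<Sum>i<M. g (Suc i))"
proof -
  have "{1..M} = {Suc 0..<Suc M}" by auto
  then have "(\<Sum>i=1..M. g i) = (\<Sum>i=0..<M. g (Suc i))" using sum.shift_bounds_Suc_ivl by metis
  also have "\<dots> = (\<Sum>i<M. g (Suc i))" by (simp add: atLeast0LessThan)
  finally show ?thesis .
qed

lemma avg_le: fixes A C t :: real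
  shows "0 \<le> A \<Longrightarrow> 0 \<le> C \<Longrightarrow> A \<le> t \<Longrightarrow> C \<le> t \<Longrightarrow> 0 \<le> (A + C) / 2 \<and> (A + C) / 2 \<le> t"
  by (simp add: field_simps)

theorem lemma3p2:
  fixes \<alpha> \<tau> \<epsilon> :: real and M :: nat
    and a w :: "nat \<Rightarrow> real \<Rightarrow> real ^ 'n" and b :: "nat \<Rightarrow> real \<Rightarrow> real"
    and \<phi> :: "real ^ 'n \<Rightarrow> real ^ 'n" and \<Omega> :: "(real ^ 'n) set"
  assumes "\<alpha> > 0" and "\<alpha> \<noteq> 1"
    and "\<tau> > 0" and "M \<ge> 1"
    and "\<forall>i \<in> {1..M}. piecewise_constant_on \<tau> (a i) \<and> piecewise_constant_on \<tau> (w i)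
                        \<and> piecewise_constant_on \<tau> (b i)"
    and "is_flow_map \<tau> (tanh_field M a w b) \<phi>"
    and "compact \<Omega>" and "\<epsilon> > 0"
  shows "\<exists>L \<ge> 1. \<exists>\<psi> \<in> leaky_nets \<alpha> L. \<forall>x0 \<in> \<Omega>. norm (\<phi> x0 - \<psi> x0) < \<epsilon>"
proof -
  note a0 = assms(1,2)
  have tau: "\<tau> > 0" and Om: "compact \<Omega>" and ep: "\<epsilon> > 0" using assms by auto
  have flow: "is_flow_map \<tau> (tanh_field M a w b) \<phi>" by fact
  obtain Pa Ba where Pa: "finite Pa" "Ba \<ge> 0" "\<forall>i\<in>{1..M}. pc_const \<tau> Pa (a i) \<and> (\<forall>s\<in>{0..\<tau>}. norm (a i s) \<le> Ba)"
    using pc_all[of "{1..M}" \<tau> a] assms(5) by auto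
  obtain Pw Bw where Pw: "finite Pw" "Bw \<ge> 0" "\<forall>i\<in>{1..M}. pc_const \<tau> Pw (w i) \<and> (\<forall>s\<in>{0..\<tau>}. norm (w i s) \<le> Bw)"
    using pc_all[of "{1..M}" \<tau> w] assms(5) by auto
  obtain Pb Bb where Pb: "finite Pb" "\<forall>i\<in>{1..M}. pc_const \<tau> Pb (b i)"
    using pc_all[of "{1..M}" \<tau> b] assms(5) by auto
  define P where "P = Pa \<union> Pw \<union> Pb"
  have finP: "finite P" using Pa Pw Pb by (simp add: P_def)
  define F where "F = tanh_field M a w b"
  define B where "B = real M * Ba"
  define L where "L = real M * Ba * Bw"
  define C2 where "C2 = real M * real M * Ba^2 * Bw"
  define Kc where "Kc = exp (L * \<tau>) * (\<tau> * (L * B + C2) + 2 * B * real (card P))"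
  have B0: "B \<ge> 0" and L0: "L \<ge> 0" and C20: "C2 \<ge> 0" using Pa Pw by (auto simp: B_def L_def C2_def)
  have Kc0: "Kc \<ge> 0" using B0 L0 C20 tau by (simp add: Kc_def)
  define th where "th = theta \<alpha>"
  have th: "th > 0" using theta_pos[OF a0] by (simp add: th_def)
  obtain m :: nat where m: "max (2 * \<tau> * Kc / \<epsilon>) (\<tau> * (Bw * Ba) / th) < real m" using reals_Archimedean2 by blast
  define n where "n = Suc m"
  have n: "n > 0" "2 * \<tau> * Kc / \<epsilon> < real n" "\<tau> * (Bw * Ba) / th < real n" using m by (auto simp: n_def)
  define h where "h = \<tau> / real n"
  have h0: "h > 0" using tau n by (simp add: h_def)
  have hK: "h * Kc < \<epsilon> / 2"
  proof -
    have "2 * \<tau> * Kc < real n * \<epsilon>" using n(2) ep by (simp add: divide_less_eq)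
    then show ?thesis using n(1) by (simp add: h_def field_simps)
  qed
  have hsmall: "Bw * Ba * h \<le> th"
  proof -
    have "\<tau> * (Bw * Ba) < real n * th" using n(3) th by (simp add: divide_less_eq)
    then show ?thesis using n(1) by (simp add: h_def field_simps)
  qed
  define r where "r k = (real k * h + real (Suc k) * h) / 2" for k
  have rk: "r k \<in> {0..\<tau>}" if "k < n" for k
  proof -
    have "real (Suc k) * h \<le> real n * h" using that h0 by (intro mult_right_mono) auto
    also have "real n * h = \<tau>" using n by (simp add: h_def)
    finally have "real (Suc k) * h \<le> \<tau>" .
    moreover have "real k * h \<le> real (Suc k) * h" using h0 by (intro mult_right_mono) auto
    ultimately have "real k * h \<le> \<tau>" by linarith
    moreover have "0 \<le> real k * h" using h0 by simp
    moreover have "0 \<le> real (Suc k) * h" using h0 by simp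
    ultimately show ?thesis using \<open>real (Suc k) * h \<le> \<tau>\<close> unfolding r_def atLeastAtMost_iff
      using avg_le[of "real k * h" "real (Suc k) * h" \<tau>] by blast
  qed
  define S where "S k = cmpI (\<lambda>i. ridge (a (Suc i) (r k)) (w (Suc i) (r k)) (b (Suc i) (r k)) h) M" for k
  define Y where "Y = cmpI S n"
  have bds: "norm (a (Suc i) (r k)) \<le> Ba \<and> norm (w (Suc i) (r k)) \<le> Bw" if "k < n" "i < M" for k i
  proof -
    have "Suc i \<in> {1..M}" using that by auto
    then show ?thesis using Pa(3) Pw(3) rk[OF that(1)] by blast
  qed
  have YA: "Y \<in> Acl \<alpha>"
    unfolding Y_def
  proof (rule cmpI_Acl)
    fix k assume k: "k < n"
    show "S k \<in> Acl \<alpha>" unfolding S_def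
    proof (rule cmpI_Acl)
      fix i assume i: "i < M"
      have "\<bar>w (Suc i) (r k) \<bullet> a (Suc i) (r k)\<bar> * h \<le> (norm (w (Suc i) (r k)) * norm (a (Suc i) (r k))) * h"
        using h0 by (intro mult_right_mono Cauchy_Schwarz_ineq2) auto
      also have "\<dots> \<le> (Bw * Ba) * h" using bds[OF k i] h0 Pw(2) by (intro mult_right_mono mult_mono) auto
      also have "\<dots> \<le> theta \<alpha>" using hsmall by (simp add: th_def mult.assoc)
      finally have sm: "\<bar>w (Suc i) (r k) \<bullet> a (Suc i) (r k)\<bar> * h \<le> theta \<alpha>" .
      show "ridge (a (Suc i) (r k)) (w (Suc i) (r k)) (b (Suc i) (r k)) h \<in> Acl \<alpha>"
        by (rule Acl_ridge[OF a0 _ sm]) (use h0 in simp)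
    qed
  qed
  obtain G where G: "G \<in> Rcl \<alpha>" "\<forall>x\<in>\<Omega>. norm (Y x - G x) < \<epsilon> / 2"
    using AclD[OF YA Om, of "\<epsilon>/2"] ep by auto
  obtain LL \<psi> where LL: "LL \<ge> 1" "\<psi> \<in> leaky_nets \<alpha> LL" "\<forall>x\<in>\<Omega>. \<psi> x = G x"
    using Rcl_net[OF G(1) Om] by blast
  have Fb: "norm (F s y) \<le> B" if "s \<in> {0..\<tau>}" for s y
    unfolding F_def B_def by (rule field_bound) (use Pa(3) that in blast)
  have FL: "norm (F s y - F s z) \<le> L * norm (y - z)" if "s \<in> {0..\<tau>}" for s y z
    unfolding F_def L_def by (rule field_lip) (use Pa(3) Pw(2,3) that in blast)+
  have Fsum: "F s y = (\<Sum>i<M. tanh (w (Suc i) s \<bullet> y + b (Suc i) s) *\<^sub>R a (Suc i) s)" for s y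
    unfolding F_def tanh_field_def by (rule sum_shift1)
  have Sst: "norm (S k y - (y + h *\<^sub>R F ((real k * h + real (Suc k) * h)/2) y)) \<le> C2 * h^2"
    and Smv: "norm (S k y - y) \<le> B * h" if k: "k < n" for k y
  proof -
    note SE = split_err[where h=h and Ba=Ba and Bw=Bw and m=M and c="\<lambda>i. a (Suc i) (r k)"
        and w="\<lambda>i. w (Suc i) (r k)" and y=y and \<beta>="\<lambda>i. b (Suc i) (r k)"]
    have SE': "norm (S k y - y) \<le> real M * h * Ba \<and>
         norm (S k y - (y + h *\<^sub>R F (r k) y)) \<le> real M * real M * h^2 * Ba^2 * Bw"
      unfolding S_def Fsum using SE h0 Pa(2) Pw(2) bds[OF k] by auto
    show "norm (S k y - (y + h *\<^sub>R F ((real k * h + real (Suc k) * h)/2) y)) \<le> C2 * h^2"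
      using SE' by (simp add: C2_def r_def algebra_simps)
    show "norm (S k y - y) \<le> B * h" using SE' by (simp add: B_def algebra_simps)
  qed
  have const: "F s y = F ((real k * h + real (Suc k) * h)/2) y"
    if k: "k < n" and nq: "\<forall>q\<in>P. \<not> (real k * h < q \<and> q < real (Suc k) * h)"
      and s: "real k * h < s" "s < real (Suc k) * h" for k s y
  proof -
    have u0: "0 \<le> real k * h" using h0 by simp
    have uv: "real k * h < real (Suc k) * h" using h0 by simp
    have "real (Suc k) * h \<le> \<tau>"
    proof -
      have "real (Suc k) * h \<le> real n * h" using k h0 by (intro mult_right_mono) auto
      also have "real n * h = \<tau>" using n by (simp add: h_def)
      finally show ?thesis .
    qed
    note uvt = u0 uv this
    have eqs: "a i s = a i (r k) \<and> w i s = w i (r k) \<and> b i s = b i (r k)" if i: "i \<in> {1..M}" for i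
    proof -
      have ca: "pc_const \<tau> Pa (a i)" and cw: "pc_const \<tau> Pw (w i)" and cb: "pc_const \<tau> Pb (b i)"
        using Pa(3) Pw(3) Pb(2) i by auto
      have nqa: "\<forall>q\<in>Pa. \<not> (real k * h < q \<and> q < real (Suc k) * h)" using nq by (auto simp: P_def)
      have nqw: "\<forall>q\<in>Pw. \<not> (real k * h < q \<and> q < real (Suc k) * h)" using nq by (auto simp: P_def)
      have nqb: "\<forall>q\<in>Pb. \<not> (real k * h < q \<and> q < real (Suc k) * h)" using nq by (auto simp: P_def)
      show ?thesis
        using ca[unfolded pc_const_def, rule_format, OF uvt nqa[rule_format] s]
              cw[unfolded pc_const_def, rule_format, OF uvt nqw[rule_format] s]
              cb[unfolded pc_const_def, rule_format, OF uvt nqb[rule_format] s]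
        by (simp add: r_def)
    qed
    show ?thesis unfolding F_def tanh_field_def r_def[symmetric]
      by (rule sum.cong) (use eqs in auto)
  qed
  show ?thesis
  proof (intro exI[of _ LL] conjI bexI[of _ \<psi>] ballI)
    show "1 \<le> LL" "\<psi> \<in> leaky_nets \<alpha> LL" using LL by auto
    fix x0 assume x0: "x0 \<in> \<Omega>"
    obtain x where xs: "is_solution \<tau> F x0 x" and phx: "\<phi> x0 = x \<tau>"
      using flow unfolding is_flow_map_def F_def by blast
    have sol: "\<forall>t\<in>{0..\<tau>}. (\<lambda>s. F s (x s)) integrable_on {0..t} \<and> x t = x0 + integral {0..t} (\<lambda>s. F s (x s))"
      and xx0: "x 0 = x0" using xs unfolding is_solution_def by auto
    have "norm (x \<tau> - cmpI S n x0) \<le> exp (L * \<tau>) * (h * (\<tau> * (L * B + C2) + 2 * B * real (card P)))"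
      by (rule euler_global[OF tau n(1) h_def sol xx0 Fb B0 FL L0 C20 Sst Smv finP const])
    also have "\<dots> = h * Kc" by (simp add: Kc_def)
    finally have e1: "norm (x \<tau> - Y x0) < \<epsilon> / 2" using hK by (simp add: Y_def)
    have e2: "norm (Y x0 - \<psi> x0) < \<epsilon> / 2" using G(2) LL(3) x0 by auto
    have "norm (\<phi> x0 - \<psi> x0) \<le> norm (x \<tau> - Y x0) + norm (Y x0 - \<psi> x0)" unfolding phx by (rule tri3)
    then show "norm (\<phi> x0 - \<psi> x0) < \<epsilon>" using e1 e2 by linarith
  qed
qed



end
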